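(* Let $G\ge 6$. For $p\in(0,1)$, let $r_1,\dots,r_G$ be i.i.d. $\mathrm{Bernoulli}(p)$, $R=\sum_j r_j$, $\hat p=R/G$, $\hat A_i=r_i-\hat p$, $A_i=r_i-p$, $\mathcal S=\{1\le R\le G-1\}$. For an interval $I\subseteq[0,1]$ of positive length and event $E$, set $\mathbb P(E\mid\mathcal S,\ p\in I):=\frac{1}{|I|}\int_I \mathbb P_p(E\mid\mathcal S)\,dp$. Then for every $i\in[G]$, \[ \mathbb P\!\left(\hat A_i<A_i\mid\mathcal S,\ p<\tfrac{2}{G}\right)>0.78,\qquad \mathbb P\!\left(\hat A_i>A_i\mid\mathcal S,\ p>\tfrac{G-2}{G}\right)>0.78. \]
   Context: Binary-reward group setting with group baseline $\hat p$, group-relative advantage $\hat A_i$, expected advantage $A_i$, and non-degenerate event $\mathcal S$; the expected reward $p$ is assumed uniformly distributed, and conditioning on $p$ lying in a subinterval means averaging the conditional probability given $\mathcal S$ uniformly over that subinterval. *)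

theory Defs
  imports "HOL-Probability.Probability"
begin

text \<open>Outcomes are reward vectors r indexed by 1..G (True = reward 1).
  Under expected reward p the r_j are i.i.d. Bernoulli(p).\<close>
definition bern_vec :: "nat \<Rightarrow> real \<Rightarrow> (nat \<Rightarrow> bool) pmf" where
  "bern_vec G p = Pi_pmf {1..G} False (\<lambda>_. bernoulli_pmf p)"

definition Rsum :: "nat \<Rightarrow> (nat \<Rightarrow> bool) \<Rightarrow> real" where
  "Rsum G r = (\<Sum>j\<in>{1..G}. of_bool (r j))"

definition phat :: "nat \<Rightarrow> (nat \<Rightarrow> bool) \<Rightarrow> real" where
  "phat G r = Rsum G r / real G"

definition Ahat :: "nat \<Rightarrow> nat \<Rightarrow> (nat \<Rightarrow> bool) \<Rightarrow> real" where
  "Ahat G i r = of_bool (r i) - phat G r"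

definition Aexp :: "real \<Rightarrow> nat \<Rightarrow> (nat \<Rightarrow> bool) \<Rightarrow> real" where
  "Aexp p i r = of_bool (r i) - p"

definition nondeg :: "nat \<Rightarrow> (nat \<Rightarrow> bool) set" where
  "nondeg G = {r. 1 \<le> Rsum G r \<and> Rsum G r \<le> real G - 1}"

definition cond_prob :: "nat \<Rightarrow> real \<Rightarrow> (nat \<Rightarrow> bool) set \<Rightarrow> real" where
  "cond_prob G p E =
     measure_pmf.prob (bern_vec G p) (E \<inter> nondeg G) / measure_pmf.prob (bern_vec G p) (nondeg G)"

text \<open>P(E | S, p \<in> I) for I = (a,b): uniform average of P_p(E_p | S) over I.
  The event may depend on p (as A_i does).\<close>
definition cond_prob_avg ::
    "nat \<Rightarrow> real \<Rightarrow> real \<Rightarrow> (real \<Rightarrow> (nat \<Rightarrow> bool) set) \<Rightarrow> real" where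
  "cond_prob_avg G a b E = integral {a<..<b} (\<lambda>p. cond_prob G p (E p)) / (b - a)"

end

theory Submission
  imports Defs
begin


lemma Rsum_card: "Rsum G r = real (card {j\<in>{1..G}. r j})"
proof -
  have "(\<Sum>j\<in>{1..G}. of_bool (r j) :: real) = (\<Sum>j\<in>{j\<in>{1..G}. r j}. 1)"
    by (intro sum.mono_neutral_cong_right) auto
  thus ?thesis unfolding Rsum_def by simp
qed

lemma prob_Rsum:
  assumes p: "0 < p" "p < 1"
  shows "measure_pmf.prob (bern_vec G p) {r. Q (Rsum G r)} =
         (\<Sum>k\<in>{k. k \<le> G \<and> Q (real k)}. real (G choose k) * p^k * (1-p)^(G-k))"
proof -
  have eq2: "binomial_pmf G p = map_pmf (\<lambda>f. card {x\<in>{1..G}. f x}) (bern_vec G p)"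
    unfolding bern_vec_def by (rule binomial_pmf_altdef') (use p in auto)
  have "measure_pmf.prob (bern_vec G p) {r. Q (Rsum G r)} =
        measure_pmf.prob (binomial_pmf G p) {k. Q (real k)}"
    by (subst eq2) (simp add: Rsum_card)
  also have "\<dots> = measure_pmf.prob (binomial_pmf G p) {k. k \<le> G \<and> Q (real k)}"
    using p by (intro measure_prob_cong_0) (auto simp: set_pmf_binomial)
  also have "\<dots> = (\<Sum>k\<in>{k. k \<le> G \<and> Q (real k)}. pmf (binomial_pmf G p) k)"
    by (rule measure_measure_pmf_finite) auto
  also have "\<dots> = (\<Sum>k\<in>{k. k \<le> G \<and> Q (real k)}. real (G choose k) * p^k * (1-p)^(G-k))"
    using p by (intro sum.cong) auto
  finally show ?thesis .
qed

definition bt :: "nat \<Rightarrow> real \<Rightarrow> nat \<Rightarrow> real" where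
  "bt G p k = real (G choose k) * p^k * (1-p)^(G-k)"

lemma sum_bt_all: "(\<Sum>k\<in>{0..G}. bt G p k) = 1"
  using binomial_ring[of p "1-p" G] by (simp add: bt_def atLeast0AtMost mult.commute mult.left_commute)

lemma sum_bt_mid:
  assumes "G \<ge> 2"
  shows "(\<Sum>k\<in>{1..G-1}. bt G p k) = 1 - (1-p)^G - p^G"
proof -
  have "{0..G} = insert 0 (insert G {1..G-1})" using assms by auto
  hence "(\<Sum>k\<in>{0..G}. bt G p k) = bt G p 0 + bt G p G + (\<Sum>k\<in>{1..G-1}. bt G p k)"
    using assms by simp
  thus ?thesis using sum_bt_all[of G p] by (simp add: bt_def)
qed

lemma sum_bt_mid2:
  assumes "G \<ge> 3"
  shows "(\<Sum>k\<in>{2..G-1}. bt G p k) = 1 - (1-p)^G - p^G - G*p*(1-p)^(G-1)"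
proof -
  have "{1..G-1} = insert 1 {2..G-1}" using assms by auto
  hence "(\<Sum>k\<in>{1..G-1}. bt G p k) = bt G p 1 + (\<Sum>k\<in>{2..G-1}. bt G p k)"
    by simp
  thus ?thesis using sum_bt_mid[of G p] assms by (simp add: bt_def)
qed

lemma sum_bt_mid3:
  assumes "G \<ge> 3"
  shows "(\<Sum>k\<in>{1..G-2}. bt G p k) = 1 - (1-p)^G - p^G - G*p^(G-1)*(1-p)"
proof -
  have "{1..G-1} = insert (G-1) {1..G-2}" using assms by auto
  hence "(\<Sum>k\<in>{1..G-1}. bt G p k) = bt G p (G-1) + (\<Sum>k\<in>{1..G-2}. bt G p k)"
  proof -
    have "(\<Sum>k\<in>insert (G-1) {1..G-2}. bt G p k) = bt G p (G-1) + (\<Sum>k\<in>{1..G-2}. bt G p k)"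
      using assms by (intro sum.insert) auto
    thus ?thesis using \<open>{1..G-1} = insert (G-1) {1..G-2}\<close> by simp
  qed
  moreover have "G - (G-1) = 1" using assms by simp
  moreover have "G choose (G-1) = G" using binomial_symmetric[of 1 G] assms by simp
  ultimately show ?thesis using sum_bt_mid[of G p] assms
    by (simp add: bt_def)
qed

lemma prob_nondeg:
  assumes p: "0 < p" "p < 1" and G: "G \<ge> 2"
  shows "measure_pmf.prob (bern_vec G p) (nondeg G) = 1 - (1-p)^G - p^G"
proof -
  have "nondeg G = {r. (\<lambda>x. 1 \<le> x \<and> x \<le> real G - 1) (Rsum G r)}"
    unfolding nondeg_def by simp
  hence "measure_pmf.prob (bern_vec G p) (nondeg G) =
     (\<Sum>k\<in>{k. k \<le> G \<and> 1 \<le> real k \<and> real k \<le> real G - 1}. bt G p k)"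
    using prob_Rsum[OF p, of G "\<lambda>x. 1 \<le> x \<and> x \<le> real G - 1"] unfolding bt_def by simp
  also have "{k. k \<le> G \<and> 1 \<le> real k \<and> real k \<le> real G - 1} = {1..G-1}"
    using G by auto
  finally show ?thesis using sum_bt_mid[OF G] by simp
qed

lemma nondeg_pos:
  assumes p: "0 < p" "p < (1::real)" and G: "G \<ge> 2"
  shows "1 - (1-p)^G - p^G > 0"
proof -
  have "(1-p)^G \<le> (1-p)^1" using p G by (intro power_decreasing) auto
  moreover have "p^G < p^1" using p G by (intro power_strict_decreasing) auto
  ultimately show ?thesis by simp
qed

definition ratio :: "nat \<Rightarrow> real \<Rightarrow> real" where
  "ratio G p = G*p*(1-p)^(G-1) / (1 - (1-p)^G - p^G)"

lemma E1_eq: "G > 0 \<Longrightarrow> {r. Ahat G i r < Aexp p i r} = {r. p < Rsum G r / G}"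
  unfolding Ahat_def Aexp_def phat_def by auto

lemma E2_eq: "G > 0 \<Longrightarrow> {r. Ahat G i r > Aexp p i r} = {r. Rsum G r / G < p}"
  unfolding Ahat_def Aexp_def phat_def by auto

lemma cond1_low:
  assumes G: "G \<ge> 3" and p: "0 < p" "p < 1 / G"
  shows "cond_prob G p {r. Ahat G i r < Aexp p i r} = 1"
proof -
  have "1 / real G \<le> 1" using G by simp
  hence p1: "p < 1" using p by linarith
  have Gp: "real G * p < 1" using p G by (simp add: field_simps)
  have "{r. Ahat G i r < Aexp p i r} \<inter> nondeg G =
        {r. (\<lambda>x. p < x / G \<and> 1 \<le> x \<and> x \<le> real G - 1) (Rsum G r)}"
  proof -
    have e: "{r. Ahat G i r < Aexp p i r} = {r. p < Rsum G r / G}" using E1_eq[of G i p] G by simp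
    show ?thesis unfolding e nondeg_def by auto
  qed
  hence "measure_pmf.prob (bern_vec G p) ({r. Ahat G i r < Aexp p i r} \<inter> nondeg G) =
     (\<Sum>k\<in>{k. k \<le> G \<and> p < real k / G \<and> 1 \<le> real k \<and> real k \<le> real G - 1}. bt G p k)"
    using prob_Rsum[OF p(1) p1, of G "\<lambda>x. p < x / G \<and> 1 \<le> x \<and> x \<le> real G - 1"] unfolding bt_def by simp
  also have "{k. k \<le> G \<and> p < real k / G \<and> 1 \<le> real k \<and> real k \<le> real G - 1} = {1..G-1}"
  proof -
    have "p < real k / G" if "1 \<le> k" for k
    proof -
      have "real G * p < real k" using Gp that by linarith
      thus ?thesis using G by (simp add: field_simps)
    qed
    thus ?thesis using G by auto
  qed
  finally show ?thesis unfolding cond_prob_def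
    using prob_nondeg[OF p(1) p1, of G] sum_bt_mid[of G p] nondeg_pos[OF p(1) p1, of G] G by simp
qed

lemma cond1_mid:
  assumes G: "G \<ge> 3" and p: "1 / G \<le> p" "p < 2 / G"
  shows "cond_prob G p {r. Ahat G i r < Aexp p i r} = 1 - ratio G p"
proof -
  have "0 < 1 / real G" using G by simp
  hence p0: "0 < p" using p(1) by linarith
  have "2 / real G < 1" using G by (simp add: field_simps)
  hence p1: "p < 1" using p by linarith
  have Gp: "1 \<le> real G * p" "real G * p < 2" using p G by (simp_all add: field_simps)
  have "{r. Ahat G i r < Aexp p i r} \<inter> nondeg G =
        {r. (\<lambda>x. p < x / G \<and> 1 \<le> x \<and> x \<le> real G - 1) (Rsum G r)}"
  proof -
    have e: "{r. Ahat G i r < Aexp p i r} = {r. p < Rsum G r / G}" using E1_eq[of G i p] G by simp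
    show ?thesis unfolding e nondeg_def by auto
  qed
  hence "measure_pmf.prob (bern_vec G p) ({r. Ahat G i r < Aexp p i r} \<inter> nondeg G) =
     (\<Sum>k\<in>{k. k \<le> G \<and> p < real k / G \<and> 1 \<le> real k \<and> real k \<le> real G - 1}. bt G p k)"
    using prob_Rsum[OF p0 p1, of G "\<lambda>x. p < x / G \<and> 1 \<le> x \<and> x \<le> real G - 1"] unfolding bt_def by simp
  also have "{k. k \<le> G \<and> p < real k / G \<and> 1 \<le> real k \<and> real k \<le> real G - 1} = {2..G-1}"
  proof -
    have iff: "p < real k / G \<longleftrightarrow> 2 \<le> k" for k
    proof -
      have "p < real k / G \<longleftrightarrow> real G * p < real k" using G by (simp add: field_simps)
      also have "\<dots> \<longleftrightarrow> 2 \<le> k"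
      proof
        assume "real G * p < real k" thus "2 \<le> k" using Gp by linarith
      next
        assume "2 \<le> k" hence "2 \<le> real k" by simp
        thus "real G * p < real k" using Gp by linarith
      qed
      finally show ?thesis .
    qed
    have i2: "real k \<le> real G - 1 \<longleftrightarrow> k \<le> G - 1" for k using G by arith
    show ?thesis
    proof (rule set_eqI)
      fix k
      show "k \<in> {k. k \<le> G \<and> p < real k / G \<and> 1 \<le> real k \<and> real k \<le> real G - 1} \<longleftrightarrow> k \<in> {2..G-1}"
        unfolding mem_Collect_eq atLeastAtMost_iff i2 iff by auto
    qed
  qed
  finally show ?thesis unfolding cond_prob_def ratio_def
    using prob_nondeg[OF p0 p1, of G] sum_bt_mid2[of G p] nondeg_pos[OF p0 p1, of G] G
    by (simp add: diff_divide_distrib)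
qed

lemma cond2_high:
  assumes G: "G \<ge> 3" and p: "(real G - 1) / G < p" "p < 1"
  shows "cond_prob G p {r. Ahat G i r > Aexp p i r} = 1"
proof -
  have "0 \<le> (real G - 1) / G" using G by simp
  hence p0: "0 < p" using p(1) by linarith
  have Gp: "real G * p > real G - 1" using p G by (simp add: field_simps)
  have "{r. Ahat G i r > Aexp p i r} \<inter> nondeg G =
        {r. (\<lambda>x. x / G < p \<and> 1 \<le> x \<and> x \<le> real G - 1) (Rsum G r)}"
  proof -
    have e: "{r. Ahat G i r > Aexp p i r} = {r. Rsum G r / G < p}" using E2_eq[of G p i] G by simp
    show ?thesis unfolding e nondeg_def by auto
  qed
  hence "measure_pmf.prob (bern_vec G p) ({r. Ahat G i r > Aexp p i r} \<inter> nondeg G) =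
     (\<Sum>k\<in>{k. k \<le> G \<and> real k / G < p \<and> 1 \<le> real k \<and> real k \<le> real G - 1}. bt G p k)"
    using prob_Rsum[OF p0 p(2), of G "\<lambda>x. x / G < p \<and> 1 \<le> x \<and> x \<le> real G - 1"] unfolding bt_def by simp
  also have "{k. k \<le> G \<and> real k / G < p \<and> 1 \<le> real k \<and> real k \<le> real G - 1} = {1..G-1}"
  proof -
    have iff: "real k / G < p" if "real k \<le> real G - 1" for k
    proof -
      have "real k < real G * p" using Gp that by linarith
      thus ?thesis using G by (simp add: field_simps)
    qed
    have i2: "real k \<le> real G - 1 \<longleftrightarrow> k \<le> G - 1" for k using G by arith
    show ?thesis
    proof (rule set_eqI)
      fix k
      show "k \<in> {k. k \<le> G \<and> real k / G < p \<and> 1 \<le> real k \<and> real k \<le> real G - 1} \<longleftrightarrow> k \<in> {1..G-1}"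
        unfolding mem_Collect_eq atLeastAtMost_iff using i2[of k] iff[of k] by auto
    qed
  qed
  finally show ?thesis unfolding cond_prob_def
    using prob_nondeg[OF p0 p(2), of G] sum_bt_mid[of G p] nondeg_pos[OF p0 p(2), of G] G by simp
qed

lemma cond2_mid:
  assumes G: "G \<ge> 3" and p: "(real G - 2) / G < p" "p \<le> (real G - 1) / G"
  shows "cond_prob G p {r. Ahat G i r > Aexp p i r} = 1 - ratio G (1 - p)"
proof -
  have "0 \<le> (real G - 2) / G" using G by simp
  hence p0: "0 < p" using p(1) by linarith
  have "(real G - 1) / G < 1" using G by (simp add: field_simps)
  hence p1: "p < 1" using p by linarith
  have Gp: "real G * p > real G - 2" "real G * p \<le> real G - 1" using p G by (simp_all add: field_simps)
  have "{r. Ahat G i r > Aexp p i r} \<inter> nondeg G =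
        {r. (\<lambda>x. x / G < p \<and> 1 \<le> x \<and> x \<le> real G - 1) (Rsum G r)}"
  proof -
    have e: "{r. Ahat G i r > Aexp p i r} = {r. Rsum G r / G < p}" using E2_eq[of G p i] G by simp
    show ?thesis unfolding e nondeg_def by auto
  qed
  hence "measure_pmf.prob (bern_vec G p) ({r. Ahat G i r > Aexp p i r} \<inter> nondeg G) =
     (\<Sum>k\<in>{k. k \<le> G \<and> real k / G < p \<and> 1 \<le> real k \<and> real k \<le> real G - 1}. bt G p k)"
    using prob_Rsum[OF p0 p1, of G "\<lambda>x. x / G < p \<and> 1 \<le> x \<and> x \<le> real G - 1"] unfolding bt_def by simp
  also have "{k. k \<le> G \<and> real k / G < p \<and> 1 \<le> real k \<and> real k \<le> real G - 1} = {1..G-2}"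
  proof -
    have iff: "real k / G < p \<longleftrightarrow> k \<le> G - 2" for k
    proof -
      have "real k / G < p \<longleftrightarrow> real k < real G * p" using G by (simp add: field_simps)
      also have "\<dots> \<longleftrightarrow> real k \<le> real G - 2"
      proof
        assume "real k < real G * p"
        hence "real k < real G - 1" using Gp by linarith
        hence "k < G - 1" using G by linarith
        thus "real k \<le> real G - 2" using G by linarith
      next
        assume "real k \<le> real G - 2" thus "real k < real G * p" using Gp by linarith
      qed
      also have "\<dots> \<longleftrightarrow> k \<le> G - 2" using G by linarith
      finally show ?thesis .
    qed
    have i2: "real k \<le> real G - 1 \<longleftrightarrow> k \<le> G - 1" for k using G by arith
    show ?thesis
    proof (rule set_eqI)
      fix k
      show "k \<in> {k. k \<le> G \<and> real k / G < p \<and> 1 \<le> real k \<and> real k \<le> real G - 1} \<longleftrightarrow> k \<in> {1..G-2}"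
        unfolding mem_Collect_eq atLeastAtMost_iff i2 iff using G by auto
    qed
  qed
  finally show ?thesis unfolding cond_prob_def ratio_def
    using prob_nondeg[OF p0 p1, of G] sum_bt_mid3[of G p] nondeg_pos[OF p0 p1, of G] G
    by (simp add: diff_divide_distrib) (simp add: algebra_simps)
qed


lemma W_pos: "0 < p \<Longrightarrow> p < 1 \<Longrightarrow> G \<ge> 1 \<Longrightarrow> 0 < 1 - (1 - p::real)^G"
proof -
  assume "0 < p" "p < 1" "G \<ge> 1"
  hence "(1-p)^G \<le> (1-p)^1" by (intro power_decreasing) auto
  thus ?thesis using \<open>0 < p\<close> by simp
qed

lemma lnW_deriv:
  assumes "0 < p" "p < 1" "G \<ge> 1"
  shows "((\<lambda>p. ln (1 - (1-p)^G)) has_real_derivative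
           (real G * (1-p)^(G-1) / (1 - (1-p)^G))) (at p)"
  using W_pos[OF assms]
  by (auto intro!: derivative_eq_intros simp: field_simps)

lemma lnW_deriv2:
  assumes "0 < p" "p < 1" "G \<ge> 2"
  shows "((\<lambda>p. real G * (1-p)^(G-1) / (1 - (1-p)^G)) has_real_derivative
     (-(real G * real (G-1) * (1-p)^(G-2) * (1 - (1-p)^G) + (real G * (1-p)^(G-1))^2) / (1 - (1-p)^G)^2)) (at p)"
proof -
  have W: "0 < 1 - (1-p)^G" using W_pos[of p G] assms by auto
  have e1: "G - 1 - 1 = G - 2" by simp
  have e2: "(1-p)^(G-1) = (1-p) * (1-p)^(G-2)" using assms by (simp add: power_eq_if[symmetric] Suc_diff_Suc numeral_2_eq_2 flip: power_Suc)
  show ?thesis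
    using W assms
    apply (intro derivative_eq_intros refl)
    apply (auto simp: e1)
    apply (simp add: field_simps power2_eq_square numeral_2_eq_2)
    done
qed

lemma lnW_concave:
  assumes "G \<ge> 2"
  shows "concave_on {0<..<1} (\<lambda>p. ln (1 - (1-p)^G))"
proof (rule f''_le0_imp_concave)
  show "convex {0<..<(1::real)}" by simp
  fix p :: real assume "p \<in> {0<..<1}"
  hence p: "0 < p" "p < 1" by auto
  show "((\<lambda>p. ln (1 - (1-p)^G)) has_real_derivative
           (real G * (1-p)^(G-1) / (1 - (1-p)^G))) (at p)"
    using lnW_deriv[OF p] assms by simp
  show "((\<lambda>p. real G * (1-p)^(G-1) / (1 - (1-p)^G)) has_real_derivative
     (-(real G * real (G-1) * (1-p)^(G-2) * (1 - (1-p)^G) + (real G * (1-p)^(G-1))^2) / (1 - (1-p)^G)^2)) (at p)"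
    using lnW_deriv2[OF p assms] .
  have W: "0 < 1 - (1-p)^G" using W_pos[of p G] p assms by auto
  have "0 \<le> real G * real (G-1) * (1-p)^(G-2) * (1 - (1-p)^G) + (real G * (1-p)^(G-1))^2"
    using W p by (intro add_nonneg_nonneg mult_nonneg_nonneg) auto
  hence h: "0 \<le> (real G * real (G-1) * (1-p)^(G-2) * (1 - (1-p)^G) + (real G * (1-p)^(G-1))^2) / (1 - (1-p)^G)^2"
    by simp
  show "-(real G * real (G-1) * (1-p)^(G-2) * (1 - (1-p)^G) + (real G * (1-p)^(G-1))^2) / (1 - (1-p)^G)^2 \<le> 0"
    unfolding minus_divide_left[symmetric] using h by linarith
qed

lemma piece:
  fixes \<phi> :: "real \<Rightarrow> real"
  assumes G: "G \<ge> 2" and ab: "0 < a" "a < b" "b < 1" and k: "\<kappa> \<ge> 0"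
    and int: "(\<phi> has_integral I) {a..b}"
    and le: "\<And>p. p \<in> {a..b} \<Longrightarrow> \<phi> p \<le> \<kappa> * (p * (real G * (1-p)^(G-1) / (1 - (1-p)^G)))"
  shows "I \<le> \<kappa> * ((a+b)/2 * (ln (1 - (1-b)^G) - ln (1 - (1-a)^G)))"
proof -
  define L :: "real \<Rightarrow> real" where "L p = ln (1 - (1-p)^G)" for p
  define D :: "real \<Rightarrow> real" where "D p = real G * (1-p)^(G-1) / (1 - (1-p)^G)" for p
  define s where "s = (L b - L a) / (b - a)"
  define \<Phi> :: "real \<Rightarrow> real" where "\<Phi> p = p * L p - p * L a - s * (p - a)^2 / 2" for p
  define \<Phi>' :: "real \<Rightarrow> real" where "\<Phi>' p = L p + p * D p - L a - s * (p - a)" for p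
  have deriv: "(\<Phi> has_real_derivative \<Phi>' p) (at p)" if "p \<in> {a..b}" for p
  proof -
    have p: "0 < p" "p < 1" using that ab by auto
    have dL: "(L has_real_derivative D p) (at p)"
      unfolding L_def D_def using lnW_deriv[OF p] G by simp
    show ?thesis unfolding \<Phi>_def[abs_def] \<Phi>'_def
      by (rule derivative_eq_intros dL refl | simp)+
  qed
  have ftc: "(\<Phi>' has_integral (\<Phi> b - \<Phi> a)) {a..b}"
    using ab by (intro fundamental_theorem_of_calculus)
      (auto intro!: has_field_derivative_at_within deriv simp: has_real_derivative_iff_has_vector_derivative[symmetric])
  have conc: "concave_on {a..b} L"
    unfolding L_def concave_on_def by (rule convex_on_subset[OF lnW_concave[OF G, unfolded concave_on_def]]) (use ab in auto)
  have chord: "L p \<ge> s * (p - a) + L a" if "p \<in> {a..b}" for p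
    using concave_onD_Icc'[OF conc that] unfolding s_def by simp
  have "p * D p \<le> \<Phi>' p" if "p \<in> {a..b}" for p
    using chord[OF that] unfolding \<Phi>'_def by simp
  hence le2: "\<phi> p \<le> \<kappa> * \<Phi>' p" if "p \<in> {a..b}" for p
    using le[OF that] k that unfolding D_def by (meson mult_left_mono order_trans)
  have "I \<le> \<kappa> * (\<Phi> b - \<Phi> a)"
    using has_integral_le[OF int has_integral_mult_right[OF ftc, of \<kappa>]] le2 by simp
  also have "\<Phi> b - \<Phi> a = (a+b)/2 * (L b - L a)"
    unfolding \<Phi>_def s_def using ab by (simp add: field_simps power2_eq_square)
  finally show ?thesis unfolding L_def .
qed


lemma ln1m_upper:
  fixes s :: real assumes "0 \<le> s" "s < 1"
  shows "ln (1 - s) \<le> - s - s^2/2 - s^3/3"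
proof -
  let ?f = "\<lambda>s. ln (1 - s) + s + s^2/2 + s^3/3"
  have "?f s \<le> ?f 0"
  proof (rule DERIV_nonpos_imp_nonincreasing[of 0 s ?f])
    fix y assume y: "0 \<le> y" "y \<le> s"
    hence y1: "y < 1" using assms by simp
    have "DERIV ?f y :> (- 1 / (1 - y) + 1 + y + y^2)"
      using y1 by (auto intro!: derivative_eq_intros simp: field_simps power2_eq_square)
    moreover have "- 1 / (1 - y) + 1 + y + y^2 = - (y^3 / (1 - y))"
      using y1 by (simp add: field_simps power2_eq_square power3_eq_cube)
    moreover have "- (y^3 / (1 - y)) \<le> 0" using y y1 by simp
    ultimately show "\<exists>d. DERIV ?f y :> d \<and> d \<le> 0" by auto
  qed (use assms in auto)
  thus ?thesis by simp
qed

lemma ln1m_lower: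
  fixes s :: real assumes "0 \<le> s" "s < 1"
  shows "- s - s^2/2 - s^3/3 - s^4/(4*(1-s)) \<le> ln (1 - s)"
proof -
  let ?f = "\<lambda>s. ln (1 - s) + s + s^2/2 + s^3/3 + s^4/(4*(1-s))"
  have "?f 0 \<le> ?f s"
  proof (rule DERIV_nonneg_imp_nondecreasing[of 0 s ?f])
    fix y assume y: "0 \<le> y" "y \<le> s"
    hence y1: "y < 1" using assms by simp
    have e: "1 - 1 / (1 - y) + y + y\<^sup>2 +
     (4 * y ^ 3 * (4 - 4 * y) + y ^ 4 * 4) / ((4 - 4 * y) * (4 - 4 * y)) = y ^ 4 / (4 * (1 - y)\<^sup>2)"
    proof -
      define z where "z = 1 - y"
      have z: "z > 0" "y = 1 - z" using y1 by (auto simp: z_def)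
      show ?thesis unfolding z(2) using z(1) by (simp add: field_simps) (simp add: algebra_simps power2_eq_square power3_eq_cube power4_eq_xxxx)
    qed
    have "y < 1 \<Longrightarrow> DERIV ?f y :> y^4 / (4*(1-y)^2)"
      apply (rule derivative_eq_intros refl | simp)+
      using e by simp
    hence "DERIV ?f y :> y^4 / (4*(1-y)^2)" using y1 by simp
    moreover have "0 \<le> y^4 / (4*(1-y)^2)" using y by simp
    ultimately show "\<exists>d. DERIV ?f y :> d \<and> d \<ge> 0" by auto
  qed (use assms in auto)
  thus ?thesis by simp
qed

lemma ln1p_lower:
  fixes d :: real assumes "0 \<le> d"
  shows "d - d^2/2 \<le> ln (1 + d)"
proof -
  let ?f = "\<lambda>d. ln (1 + d) - d + d^2/2"
  have "?f 0 \<le> ?f d"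
  proof (rule DERIV_nonneg_imp_nondecreasing[of 0 d ?f])
    fix y assume y: "0 \<le> y" "y \<le> d"
    have "DERIV ?f y :> (1 / (1 + y) - 1 + y)"
      using y by (auto intro!: derivative_eq_intros simp: field_simps power2_eq_square)
    moreover have "1 / (1 + y) - 1 + y = y^2 / (1 + y)"
      using y by (simp add: field_simps power2_eq_square)
    moreover have "0 \<le> y^2 / (1 + y)" using y by simp
    ultimately show "\<exists>e. DERIV ?f y :> e \<and> e \<ge> 0" by auto
  qed (use assms in auto)
  thus ?thesis by simp
qed

lemma pade_ln:
  fixes r :: real assumes "1 \<le> r"
  shows "ln r \<le> (r - 1) * (r + 5) / (2 * (2 * r + 1))"
proof -
  let ?f = "\<lambda>r. (r - 1) * (r + 5) / (2 * (2 * r + 1)) - ln r"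
  have "?f 1 \<le> ?f r"
  proof (rule DERIV_nonneg_imp_nondecreasing[of 1 r ?f])
    fix y :: real assume y: "1 \<le> y" "y \<le> r"
    have "DERIV ?f y :> ((4*y^2 + 4*y + 28) / (4 * (2*y+1)^2) - 1 / y)"
      using y by (auto intro!: derivative_eq_intros simp: field_simps power2_eq_square)
    moreover have "(4*y^2 + 4*y + 28) / (4 * (2*y+1)^2) - 1 / y = (y - 1)^3 / (y * (2*y+1)^2)"
      using y by (simp add: field_simps) (simp add: algebra_simps eval_nat_numeral)
    moreover have "0 \<le> (y - 1)^3 / (y * (2*y+1)^2)" using y by simp
    ultimately show "\<exists>e. DERIV ?f y :> e \<and> e \<ge> 0" by auto
  qed (use assms in auto)
  thus ?thesis by simp
qed

lemma expm_bounds: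
  fixes d :: real assumes "0 \<le> d"
  shows "d - d^2/2 \<le> 1 - exp (-d)" "1 - exp (-d) \<le> d - d^2/2 + d^3/6"
proof -
  obtain t where t: "exp (-d) = (\<Sum>m<3. (-d)^m / fact m) + exp t / fact 3 * (-d)^3"
    using Maclaurin_exp_le[of "-d" 3] by blast
  have "exp t / fact 3 * (-d)^3 \<le> 0" using assms by (simp add: mult_nonneg_nonneg)
  hence "exp (-d) \<le> 1 - d + d^2/2" using t by (simp add: eval_nat_numeral)
  thus "d - d^2/2 \<le> 1 - exp (-d)" by simp
  obtain t where t: "exp (-d) = (\<Sum>m<4. (-d)^m / fact m) + exp t / fact 4 * (-d)^4"
    using Maclaurin_exp_le[of "-d" 4] by blast
  have "exp t / fact 4 * (-d)^4 \<ge> 0" by simp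
  hence "exp (-d) \<ge> 1 - d + d^2/2 - d^3/6" using t by (simp add: eval_nat_numeral)
  thus "1 - exp (-d) \<le> d - d^2/2 + d^3/6" by simp
qed

lemma exp_bounds:
  fixes x :: real assumes "0 \<le> x" "x^n / fact n < 1"
  shows "(\<Sum>m<n. x^m / fact m) \<le> exp x"
    "exp x * (1 - x^n / fact n) \<le> (\<Sum>m<n. x^m / fact m)"
proof -
  obtain t where t: "\<bar>t\<bar> \<le> \<bar>x\<bar>" "exp x = (\<Sum>m<n. x^m / fact m) + exp t / fact n * x^n"
    using Maclaurin_exp_le[of x n] by blast
  have "0 \<le> exp t / fact n * x^n" using assms by simp
  thus "(\<Sum>m<n. x^m / fact m) \<le> exp x" using t by simp
  have "exp t \<le> exp x" using t(1) assms by simp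
  hence "exp t / fact n * x^n \<le> exp x / fact n * x^n"
    using assms by (intro mult_right_mono divide_right_mono) auto
  hence "exp x - exp x / fact n * x^n \<le> (\<Sum>m<n. x^m / fact m)" using t(2) by linarith
  moreover have "exp x * (1 - x^n / fact n) = exp x - exp x / fact n * x^n" by (simp add: algebra_simps)
  ultimately show "exp x * (1 - x^n / fact n) \<le> (\<Sum>m<n. x^m / fact m)" by simp
qed


lemma node_core:
  fixes x :: real and G :: nat
  assumes G: "G \<ge> 12" and x: "1 \<le> x" "x \<le> 2"
  defines "t \<equiv> 1 / real G"
  shows "\<exists>\<delta>. (1 - x / G)^G = exp (-x) * exp (-\<delta>) \<and>
            x^2/2*t + x^3/3*t^2 \<le> \<delta> \<and> \<delta> \<le> x^2/2*t + x^3/3*t^2 + x^4*(6/5)/4*t^3"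
proof -
  have Gpos: "real G > 0" using G by simp
  have Gt: "real G * t = 1" unfolding t_def using Gpos by simp
  have t0: "t > 0" unfolding t_def using Gpos by simp
  have t12: "t \<le> 1/12" unfolding t_def using G by (simp add: field_simps)
  define s where "s = x * t"
  have s_eq: "x / G = s" unfolding s_def t_def by simp
  have s0: "0 < s" unfolding s_def using t0 x by simp
  have s6: "s \<le> 1/6"
  proof -
    have "x * t \<le> 2 * (1/12)" using x t12 t0 by (intro mult_mono) auto
    thus ?thesis unfolding s_def by simp
  qed
  have s1: "s < 1" using s6 by simp
  define \<delta> where "\<delta> = - x - real G * ln (1 - s)"
  have u: "(1 - x / G)^G = exp (-x) * exp (-\<delta>)"
  proof -
    have "(1 - x/G)^G = exp (ln (1 - s))^G" using s1 s_eq by simp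
    also have "\<dots> = exp (real G * ln (1 - s))" by (simp add: exp_of_nat_mult)
    also have "\<dots> = exp (-x) * exp (-\<delta>)" unfolding \<delta>_def by (simp flip: exp_add)
    finally show ?thesis .
  qed
  have Gs: "real G * s = x" "real G * s^2 = x^2 * t" "real G * s^3 = x^3 * t^2" "real G * s^4 = x^4 * t^3"
    unfolding s_def using Gt by (simp_all add: power2_eq_square power3_eq_cube power4_eq_xxxx algebra_simps)
  have up: "ln (1 - s) \<le> - s - s^2/2 - s^3/3" using ln1m_upper s0 s1 by simp
  have "real G * ln (1 - s) \<le> real G * (- s - s^2/2 - s^3/3)"
    using up Gpos by (intro mult_left_mono) auto
  also have "\<dots> = - x - x^2/2*t - x^3/3*t^2" using Gs by (simp add: algebra_simps)
  finally have d1: "x^2/2*t + x^3/3*t^2 \<le> \<delta>" unfolding \<delta>_def by simp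
  have lo: "- s - s^2/2 - s^3/3 - s^4/(4*(1-s)) \<le> ln (1 - s)" using ln1m_lower s0 s1 by simp
  have "s^4/(4*(1-s)) \<le> s^4 * (6/5) / 4"
  proof -
    have "1 / (1 - s) \<le> 6/5" using s6 s1 by (simp add: field_simps)
    hence h: "s^4 * (1/(1-s)) \<le> s^4 * (6/5)" by (intro mult_left_mono) auto
    have eq: "s^4/(4*(1-s)) = s^4 * (1/(1-s)) / 4" by simp
    show ?thesis unfolding eq by (rule divide_right_mono[OF h]) simp
  qed
  hence "- s - s^2/2 - s^3/3 - s^4 * (6/5) / 4 \<le> ln (1 - s)" using lo by linarith
  hence "real G * (- s - s^2/2 - s^3/3 - s^4 * (6/5) / 4) \<le> real G * ln (1 - s)"
    using Gpos by (intro mult_left_mono) auto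
  moreover have "real G * (- s - s^2/2 - s^3/3 - s^4 * (6/5) / 4) = - x - x^2/2*t - x^3/3*t^2 - x^4*(6/5)/4*t^3"
    using Gs by (simp add: algebra_simps)
  ultimately have d2: "\<delta> \<le> x^2/2*t + x^3/3*t^2 + x^4*(6/5)/4*t^3" unfolding \<delta>_def by simp
  show ?thesis using u d1 d2 by blast
qed

lemma exp_neg_le_half: "1 \<le> x \<Longrightarrow> exp (-x) \<le> (1/2::real)"
proof -
  assume x: "1 \<le> x"
  have "exp (-x) \<le> exp (-1)" using x by simp
  also have "exp (-1::real) = 1 / exp 1" by (subst exp_minus) (simp add: inverse_eq_divide)
  also have "1 / exp (1::real) \<le> 1/2"
  proof -
    have "2 \<le> exp (1::real)" using exp_ge_add_one_self[of 1] by simp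
    thus ?thesis by (simp add: field_simps)
  qed
  finally show ?thesis .
qed

lemma mono_half_sq:
  fixes y z :: real assumes "0 \<le> y" "y \<le> z" "z \<le> 1"
  shows "y - y^2/2 \<le> z - z^2/2"
proof -
  have "(z - y) * (1 - (z + y)/2) \<ge> 0" using assms by (intro mult_nonneg_nonneg) auto
  moreover have "(z - y) * (1 - (z + y)/2) = (z - z^2/2) - (y - y^2/2)" by (simp add: field_simps power2_eq_square)
  ultimately show ?thesis by linarith
qed

lemma delta_small:
  fixes x t :: real assumes "1 \<le> x" "x \<le> 2" "0 < t" "t \<le> 1/12"
  shows "x^2/2*t + x^3/3*t^2 + x^4*(6/5)/4*t^3 \<le> 1"
proof -
  have x2: "x^2 \<le> 4" "x^3 \<le> 8" "x^4 \<le> 16" using assms power_mono[of x 2 2] power_mono[of x 2 3] power_mono[of x 2 4] by auto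
  have t2: "t^2 \<le> 1/144" "t^3 \<le> 1/1728" using power_mono[of t "1/12" 2] power_mono[of t "1/12" 3] assms
    by (auto simp: power_divide)
  have "x^2/2*t \<le> 4/2*(1/12)" using x2 assms by (intro mult_mono) auto
  moreover have "x^3/3*t^2 \<le> 8/3*(1/144)" using x2 t2 assms by (intro mult_mono) auto
  moreover have "x^4*(6/5)/4*t^3 \<le> 16*(6/5)/4*(1/1728)" using x2 t2 assms by (intro mult_mono) auto
  ultimately show ?thesis by linarith
qed

lemma node_lower:
  fixes x clo A B C :: real and G :: nat
  assumes G: "G \<ge> 12" and x: "1 \<le> x" "x \<le> 2" and c: "0 < clo" "clo \<le> exp (-x)"
    and hA: "A \<le> clo/(1-clo) * (x^2/2)"
    and hB: "B \<le> clo/(1-clo) * (x^3/3) - (clo/(1-clo) + (clo/(1-clo))^2) * (x^2/2)^2/2"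
    and hC: "C \<le> - ((clo/(1-clo) + (clo/(1-clo))^2)/2 * (2*(x^2/2)*(x^3/3) + (x^3/3)^2/12))"
  shows "A * (1/G) + B * (1/G)^2 + C * (1/G)^3 \<le> ln (1 - (1 - x/G)^G) - ln (1 - exp (-x))"
proof -
  define t where "t = 1 / real G"
  have t0: "0 < t" and t12: "t \<le> 1/12" unfolding t_def using G by (auto simp: field_simps)
  obtain \<delta> where u: "(1 - x / G)^G = exp (-x) * exp (-\<delta>)"
     and d1: "x^2/2*t + x^3/3*t^2 \<le> \<delta>" and d2: "\<delta> \<le> x^2/2*t + x^3/3*t^2 + x^4*(6/5)/4*t^3"
    using node_core[OF G x] unfolding t_def by blast
  define a where "a = x^2/2"
  define b where "b = x^3/3"
  define c where "c = exp (-x)"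
  define g where "g = clo/(1-clo)"
  define \<gamma> where "\<gamma> = c/(1-c)"
  define dl where "dl = a*t + b*t^2"
  have a0: "a \<ge> 0" and b0: "b \<ge> 0" unfolding a_def b_def using x by auto
  have dl0: "0 \<le> dl" unfolding dl_def using a0 b0 t0 by simp
  have dld: "dl \<le> \<delta>" using d1 unfolding dl_def a_def b_def by simp
  have d_le1: "\<delta> \<le> 1" using d2 delta_small[OF x t0 t12] by linarith
  have c_half: "c \<le> 1/2" unfolding c_def using exp_neg_le_half x by simp
  have c0: "0 < c" unfolding c_def by simp
  have clo1: "clo < 1" using c c_half unfolding c_def by simp
  have g0: "0 \<le> g" unfolding g_def using c clo1 by simp
  have g\<gamma>: "g \<le> \<gamma>"
  proof -
    have "\<gamma> - g = (c - clo) / ((1-c)*(1-clo))"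
      unfolding \<gamma>_def g_def using c_half clo1 by (simp add: field_simps)
    also have "\<dots> \<ge> 0" using c c_half clo1 x unfolding c_def by (intro divide_nonneg_nonneg mult_nonneg_nonneg) auto
    finally show ?thesis by simp
  qed
  have \<gamma>1: "\<gamma> \<le> 1" unfolding \<gamma>_def using c_half c0 by (simp add: field_simps)
  define E where "E = 1 - exp (-\<delta>)"
  define d where "d = \<gamma> * E"
  have onemu: "1 - (1 - x/G)^G = (1 - c) * (1 + d)"
    unfolding u d_def E_def \<gamma>_def c_def[symmetric] using c_half by (simp add: field_simps)
  have dl_d: "0 \<le> \<delta>" using dl0 dld by simp
  have E1: "dl - dl^2/2 \<le> E"
  proof -
    have "dl - dl^2/2 \<le> \<delta> - \<delta>^2/2" using mono_half_sq[OF dl0 dld d_le1] .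
    also have "\<dots> \<le> E" unfolding E_def using expm_bounds(1)[OF dl_d] .
    finally show ?thesis .
  qed
  have E0: "0 \<le> dl - dl^2/2" using mono_half_sq[of 0 dl] dl0 dld d_le1 by simp
  have Ele: "E \<le> 1" unfolding E_def by simp
  have E00: "0 \<le> E" using E0 E1 by linarith
  define dd where "dd = g * (dl - dl^2/2)"
  have dd0: "0 \<le> dd" unfolding dd_def using g0 E0 by simp
  have dd_d: "dd \<le> d" unfolding dd_def d_def using g\<gamma> E1 g0 E0 E00 by (intro mult_mono) auto
  have d1': "d \<le> 1" unfolding d_def using \<gamma>1 Ele E00 g0 g\<gamma> by (meson mult_le_one order_trans)
  have d0: "0 \<le> d" using dd0 dd_d by linarith
  have eqln: "ln (1 - (1 - x/G)^G) - ln (1 - exp (-x)) = ln (1 + d)"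
    unfolding onemu c_def[symmetric] using c_half d0 by (simp add: ln_mult)
  define Q where "Q = a^2*t^2 + (2*a*b + b^2/12)*t^3"
  define R where "R = g*dl - g*dl^2/2 - g^2*dl^2/2"
  define M where "M = g*a*t + (g*b - (g+g^2)*a^2/2)*t^2 - (g+g^2)/2*(2*a*b + b^2/12)*t^3"
  have h1a: "d - d^2/2 \<le> ln (1 + d)" using ln1p_lower[OF d0] .
  have h1b: "dd - dd^2/2 \<le> d - d^2/2" using mono_half_sq[OF dd0 dd_d d1'] .
  have h1c: "R \<le> dd - dd^2/2"
  proof -
    have "dd \<le> g * dl" unfolding dd_def using g0 dl0 by (simp add: mult_left_mono)
    hence "dd^2 \<le> (g*dl)^2" using dd0 by (intro power_mono) auto
    thus ?thesis unfolding dd_def R_def by (simp add: algebra_simps power_mult_distrib)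
  qed
  have h2: "R = g*a*t + g*b*t^2 - (g + g^2)/2 * dl^2"
    unfolding R_def dl_def by (simp add: algebra_simps)
  have dlQ: "dl^2 \<le> Q"
  proof -
    have "b^2*t^4 \<le> b^2/12*t^3"
    proof -
      have "t^4 = t * t^3" by (simp add: power_numeral_reduce)
      also have "\<dots> \<le> 1/12 * t^3" using t12 t0 by (intro mult_right_mono) auto
      finally have "t^4 \<le> 1/12 * t^3" .
      hence "b^2 * t^4 \<le> b^2 * (1/12 * t^3)" by (intro mult_left_mono) auto
      thus ?thesis by simp
    qed
    moreover have "dl^2 = a^2*t^2 + 2*a*b*t^3 + b^2*t^4" unfolding dl_def
      by (simp add: algebra_simps power2_eq_square power3_eq_cube power4_eq_xxxx)
    ultimately show ?thesis unfolding Q_def by (simp add: algebra_simps)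
  qed
  have h3: "(g + g^2)/2 * dl^2 \<le> (g + g^2)/2 * Q"
    using dlQ g0 by (intro mult_left_mono) auto
  have h4: "A * t + B * t^2 + C * t^3 \<le> M"
  proof -
    have "A * t \<le> (g*a) * t" using hA t0 unfolding g_def a_def by (intro mult_right_mono) auto
    moreover have "B * t^2 \<le> (g*b - (g+g^2)*a^2/2) * t^2" using hB t0 unfolding g_def a_def b_def
      by (intro mult_right_mono) (auto simp: power_divide)
    moreover have "C * t^3 \<le> (-((g+g^2)/2*(2*a*b + b^2/12))) * t^3" using hC t0 unfolding g_def a_def b_def
      by (intro mult_right_mono) auto
    ultimately show ?thesis unfolding M_def by (simp add: algebra_simps)
  qed
  have h5: "M = g*a*t + g*b*t^2 - (g + g^2)/2 * Q"
    unfolding M_def Q_def by (simp add: algebra_simps)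
  have "A * t + B * t^2 + C * t^3 \<le> ln (1 + d)"
    using h1a h1b h1c h2 h3 h4 h5 by linarith
  thus ?thesis using eqln unfolding t_def by simp
qed

lemma node_upper:
  fixes x chi A B C :: real and G :: nat
  assumes G: "G \<ge> 12" and x: "1 \<le> x" "x \<le> 2" and c: "exp (-x) \<le> chi" "chi < 1"
    and hA: "chi/(1-chi) * (x^2/2) \<le> A"
    and hB: "chi/(1-chi) * (x^3/3 - (x^2/2)^2/2) \<le> B"
    and hC: "chi/(1-chi) * (x^4*(6/5)/4 - (x^2/2)*(x^3/3)
               + (x^2/2 + (x^3/3)/12 + (x^4*(6/5)/4)/144)^3/6) \<le> C"
  shows "ln (1 - (1 - x/G)^G) - ln (1 - exp (-x)) \<le> A * (1/G) + B * (1/G)^2 + C * (1/G)^3"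
proof -
  define t where "t = 1 / real G"
  have t0: "0 < t" and t12: "t \<le> 1/12" unfolding t_def using G by (auto simp: field_simps)
  obtain \<delta> where u: "(1 - x / G)^G = exp (-x) * exp (-\<delta>)"
     and d1: "x^2/2*t + x^3/3*t^2 \<le> \<delta>" and d2: "\<delta> \<le> x^2/2*t + x^3/3*t^2 + x^4*(6/5)/4*t^3"
    using node_core[OF G x] unfolding t_def by blast
  define a where "a = x^2/2"
  define b where "b = x^3/3"
  define e where "e = x^4*(6/5)/4"
  define K where "K = a + b/12 + e/144"
  define c where "c = exp (-x)"
  define g where "g = chi/(1-chi)"
  define \<gamma> where "\<gamma> = c/(1-c)"
  define dl where "dl = a*t + b*t^2"
  define dh where "dh = a*t + b*t^2 + e*t^3"
  have a0: "a \<ge> 0" and b0: "b \<ge> 0" and e0: "e \<ge> 0" unfolding a_def b_def e_def using x by auto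
  have dl0: "0 \<le> dl" unfolding dl_def using a0 b0 t0 by simp
  have dld: "dl \<le> \<delta>" using d1 unfolding dl_def a_def b_def by simp
  have ddh: "\<delta> \<le> dh" using d2 unfolding dh_def a_def b_def e_def by simp
  have d0: "0 \<le> \<delta>" using dl0 dld by simp
  have c_half: "c \<le> 1/2" unfolding c_def using exp_neg_le_half x by simp
  have c0: "0 < c" unfolding c_def by simp
  have chi0: "0 < chi" using c(1) exp_gt_zero[of "-x"] by linarith
  have g0: "0 \<le> g" unfolding g_def using chi0 c by simp
  have \<gamma>g: "\<gamma> \<le> g"
  proof -
    have "g - \<gamma> = (chi - c) / ((1-c)*(1-chi))"
      unfolding \<gamma>_def g_def using c_half c by (simp add: field_simps)
    also have "\<dots> \<ge> 0" using c c_half x unfolding c_def by (intro divide_nonneg_nonneg mult_nonneg_nonneg) auto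
    finally show ?thesis by simp
  qed
  have \<gamma>0: "0 \<le> \<gamma>" unfolding \<gamma>_def using c_half c0 by simp
  define E where "E = 1 - exp (-\<delta>)"
  define d where "d = \<gamma> * E"
  have onemu: "1 - (1 - x/G)^G = (1 - c) * (1 + d)"
    unfolding u d_def E_def \<gamma>_def c_def[symmetric] using c_half by (simp add: field_simps)
  have E0: "0 \<le> E" unfolding E_def using d0 by simp
  have d00: "0 \<le> d" unfolding d_def using \<gamma>0 E0 by simp
  have eqln: "ln (1 - (1 - x/G)^G) - ln (1 - exp (-x)) = ln (1 + d)"
    unfolding onemu c_def[symmetric] using c_half d00 by (simp add: ln_mult)
  have s1: "ln (1 + d) \<le> d" using ln_add_one_self_le_self[OF d00] .
  have s2: "d \<le> g * E" unfolding d_def using \<gamma>g E0 by (intro mult_right_mono) auto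
  have s3: "E \<le> \<delta> - \<delta>^2/2 + \<delta>^3/6" unfolding E_def using expm_bounds(2)[OF d0] .
  have sq: "dl^2 \<le> \<delta>^2" using dl0 dld by (intro power_mono) auto
  have dh0: "0 \<le> dh" using d0 ddh by simp
  have dhK: "dh \<le> K * t"
  proof -
    have "t^2 \<le> t * (1/12)" using t0 t12 by (simp add: power2_eq_square mult_left_mono)
    hence bt: "b * t^2 \<le> b * (t * (1/12))" using b0 by (intro mult_left_mono) auto
    have "t^3 \<le> t * (1/144)"
    proof -
      have "t^2 \<le> (1/12)^2" using t0 t12 by (intro power_mono) auto
      hence "t * t^2 \<le> t * (1/12)^2" using t0 by (intro mult_left_mono) auto
      thus ?thesis by (simp add: power_numeral_reduce power2_eq_square)
    qed
    hence et: "e * t^3 \<le> e * (t * (1/144))" using e0 by (intro mult_left_mono) auto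
    show ?thesis unfolding dh_def K_def using bt et by (simp add: algebra_simps)
  qed
  have cube: "\<delta>^3 \<le> K^3 * t^3"
  proof -
    have "\<delta>^3 \<le> dh^3" using d0 ddh by (intro power_mono) auto
    also have "\<dots> \<le> (K*t)^3" using dh0 dhK by (intro power_mono) auto
    finally show ?thesis by (simp add: power_mult_distrib)
  qed
  have dl2: "a^2*t^2 + 2*a*b*t^3 \<le> dl^2"
  proof -
    have "dl^2 = a^2*t^2 + 2*a*b*t^3 + b^2*t^4" unfolding dl_def
      by (simp add: algebra_simps power2_eq_square power3_eq_cube power4_eq_xxxx)
    moreover have "0 \<le> b^2*t^4" using t0 by simp
    ultimately show ?thesis by linarith
  qed
  define P where "P = a*t + (b - a^2/2)*t^2 + (e - a*b + K^3/6)*t^3"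
  have EP: "E \<le> P"
  proof -
    have "E \<le> dh - (a^2*t^2 + 2*a*b*t^3)/2 + K^3*t^3/6"
      using s3 ddh sq dl2 cube by (simp add: field_simps)
    also have "\<dots> = P" unfolding P_def dh_def by (simp add: algebra_simps)
    finally show ?thesis .
  qed
  have "g * E \<le> g * P" using EP g0 by (intro mult_left_mono) auto
  also have "g * P = (g*a)*t + (g*(b - a^2/2))*t^2 + (g*(e - a*b + K^3/6))*t^3"
    unfolding P_def by (simp add: algebra_simps)
  also have "\<dots> \<le> A*t + B*t^2 + C*t^3"
  proof -
    have "(g*a)*t \<le> A*t" using hA t0 unfolding g_def a_def by (intro mult_right_mono) auto
    moreover have "(g*(b - a^2/2))*t^2 \<le> B*t^2" using hB t0 unfolding g_def a_def b_def
      by (intro mult_right_mono) auto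
    moreover have "(g*(e - a*b + K^3/6))*t^3 \<le> C*t^3" using hC t0 unfolding g_def a_def b_def e_def K_def
      by (intro mult_right_mono) auto
    ultimately show ?thesis by linarith
  qed
  finally have "ln (1 + d) \<le> A*t + B*t^2 + C*t^3" using s1 s2 by linarith
  thus ?thesis using eqln unfolding t_def by simp
qed


lemma ratio_le:
  assumes p: "0 < p" "p < 1" and G: "G \<ge> 2" and k: "\<kappa> \<ge> 1"
    and hk: "\<kappa> * p^G \<le> (\<kappa> - 1) * (1 - (1-p)^G)"
  shows "ratio G p \<le> \<kappa> * (p * (real G * (1-p)^(G-1) / (1 - (1-p)^G)))"
proof -
  define N where "N = real G * p * (1-p)^(G-1)"
  define W where "W = 1 - (1-p)^G"
  have N0: "0 \<le> N" unfolding N_def using p by simp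
  have W0: "0 < W" unfolding W_def using W_pos[of p G] p G by simp
  have D0: "0 < W - p^G" unfolding W_def using nondeg_pos[OF p G] by simp
  have "N * W \<le> \<kappa> * N * (W - p^G)"
  proof -
    have "N * (\<kappa> * p^G - (\<kappa> - 1) * W) \<le> 0"
      using N0 hk unfolding W_def by (simp add: mult_nonneg_nonpos)
    thus ?thesis by (simp add: algebra_simps)
  qed
  hence "N / (W - p^G) \<le> \<kappa> * N / W"
    using W0 D0 by (simp add: field_simps)
  thus ?thesis unfolding ratio_def N_def W_def by (simp add: field_simps)
qed

lemma ratio_cont:
  assumes "0 < a" "b < 1" "G \<ge> 2"
  shows "continuous_on {a..b} (ratio G)"
proof -
  have nz: "1 - (1-p)^G - p^G \<noteq> 0" if "p \<in> {a..b}" for p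
  proof -
    have "0 < p" "p < 1" using that assms by auto
    thus ?thesis using nondeg_pos[of p G] assms by simp
  qed
  show ?thesis unfolding ratio_def
    by (intro continuous_intros) (use nz in auto)
qed

lemma has_integral_pieces:
  fixes f :: "real \<Rightarrow> real" and q :: "nat \<Rightarrow> real"
  assumes "\<And>k. k < n \<Longrightarrow> (f has_integral I k) {q k..q (Suc k)}"
    and "\<And>k. k < n \<Longrightarrow> q k \<le> q (Suc k)"
  shows "(f has_integral (\<Sum>k<n. I k)) {q 0..q n} \<and> q 0 \<le> q n"
  using assms
proof (induction n)
  case 0
  then show ?case using has_integral_refl(1)[of f "q 0"] by simp
next
  case (Suc n)
  hence IH: "(f has_integral (\<Sum>k<n. I k)) {q 0..q n}" "q 0 \<le> q n" by auto
  have "(f has_integral ((\<Sum>k<n. I k) + I n)) {q 0..q (Suc n)}"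
    using has_integral_combine[OF IH(2) _ IH(1) Suc.prems(1)[of n]] Suc.prems(2)[of n] by simp
  then show ?case using IH(2) Suc.prems(2)[of n] by simp
qed

definition lw :: "nat \<Rightarrow> nat \<Rightarrow> real" where
  "lw G k = ln (1 - (1 - (8 + real k) / (8 * real G))^G)"

definition Sfun :: "nat \<Rightarrow> real" where
  "Sfun G = (\<Sum>k<8. (17 + 2 * real k) / 16 * (lw G (Suc k) - lw G k))"

lemma int_bound:
  assumes G: "G \<ge> 6" and k: "\<kappa> \<ge> 1"
    and hk: "\<And>p. p \<in> {1/G..2/G} \<Longrightarrow> \<kappa> * p^G \<le> (\<kappa> - 1) * (1 - (1-p)^G)"
  shows "ratio G integrable_on {1/G..2/G}"
    "real G * integral {1/G..2/G} (ratio G) \<le> \<kappa> * Sfun G"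
proof -
  define q where "q k = (8 + real k) / (8 * real G)" for k
  have Gp: "real G > 0" using G by simp
  have q0: "q 0 = 1/G" and q8: "q 8 = 2/G" unfolding q_def using Gp by (auto simp: field_simps)
  have qmono: "q k \<le> q (Suc k)" for k unfolding q_def using Gp by (simp add: divide_right_mono)
  have qpos: "0 < q k" for k unfolding q_def using Gp by simp
  have q1: "q k < 1" if "k \<le> 8" for k
  proof -
    have "8 + real k \<le> 16" using that by simp
    also have "16 < 8 * real G" using G by simp
    finally show ?thesis unfolding q_def using Gp by simp
  qed
  define I where "I k = integral {q k..q (Suc k)} (ratio G)" for k
  have hasI: "(ratio G has_integral I k) {q k..q (Suc k)}" if "k < 8" for k
    unfolding I_def using ratio_cont[OF qpos q1[of "Suc k"]] G that
    by (intro integrable_integral integrable_continuous_interval) auto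
  have tot: "(ratio G has_integral (\<Sum>k<8. I k)) {q 0..q 8}"
    using has_integral_pieces[of 8 "ratio G" I q] hasI qmono by blast
  show "ratio G integrable_on {1/G..2/G}" using tot q0 q8 by auto
  have Ieq: "integral {1/G..2/G} (ratio G) = (\<Sum>k<8. I k)"
    using tot q0 q8 by (simp add: integral_unique)
  have Ik: "real G * I k \<le> \<kappa> * ((17 + 2 * real k) / 16 * (lw G (Suc k) - lw G k))" if "k < 8" for k
  proof -
    have "I k \<le> \<kappa> * ((q k + q (Suc k))/2 * (ln (1 - (1 - q (Suc k))^G) - ln (1 - (1 - q k)^G)))"
    proof (rule piece[OF _ qpos _ q1 _ hasI[OF that]])
      show "2 \<le> G" using G by simp
      show "q k < q (Suc k)" unfolding q_def using Gp by (simp add: divide_strict_right_mono)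
      show "Suc k \<le> 8" using that by simp
      show "0 \<le> \<kappa>" using k by simp
      fix p assume p: "p \<in> {q k..q (Suc k)}"
      have "p \<in> {1/G..2/G}"
      proof -
        have "q 0 \<le> q k" unfolding q_def using Gp by (simp add: field_simps)
        moreover have "q (Suc k) \<le> q 8" unfolding q_def using Gp that by (simp add: field_simps)
        ultimately show ?thesis using p q0 q8 by auto
      qed
      moreover have "0 < p" "p < 1" using p qpos[of k] q1[of "Suc k"] that by auto
      ultimately show "ratio G p \<le> \<kappa> * (p * (real G * (1-p)^(G-1) / (1 - (1-p)^G)))"
        using ratio_le[of p G \<kappa>] hk k G by simp
    qed
    hence "real G * I k \<le> real G * (\<kappa> * ((q k + q (Suc k))/2 * (ln (1 - (1 - q (Suc k))^G) - ln (1 - (1 - q k)^G))))"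
      using Gp by simp
    also have "\<dots> = \<kappa> * ((17 + 2 * real k) / 16 * (lw G (Suc k) - lw G k))"
      unfolding q_def lw_def using Gp by (simp add: field_simps)
    finally show ?thesis .
  qed
  have "real G * integral {1/G..2/G} (ratio G) = (\<Sum>k<8. real G * I k)"
    unfolding Ieq by (simp add: sum_distrib_left)
  also have "\<dots> \<le> (\<Sum>k<8. \<kappa> * ((17 + 2 * real k) / 16 * (lw G (Suc k) - lw G k)))"
    using Ik by (intro sum_mono) auto
  also have "\<dots> = \<kappa> * Sfun G" unfolding Sfun_def by (simp add: sum_distrib_left)
  finally show "real G * integral {1/G..2/G} (ratio G) \<le> \<kappa> * Sfun G" .
qed


lemma Sfun_expand: "Sfun G = 17/16*(lw G 1 - lw G 0) + 19/16*(lw G 2 - lw G 1) + 21/16*(lw G 3 - lw G 2)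
  + 23/16*(lw G 4 - lw G 3) + 25/16*(lw G 5 - lw G 4) + 27/16*(lw G 6 - lw G 5) + 29/16*(lw G 7 - lw G 6)
  + 31/16*(lw G 8 - lw G 7)"
  unfolding Sfun_def by (simp add: eval_nat_numeral)

lemma lnstep:
  fixes a b r P :: real
  assumes "0 < b" "a \<le> r * b" "0 < a" "1 \<le> r" "(r - 1) * (r + 5) / (2 * (2 * r + 1)) \<le> P"
  shows "ln a - ln b \<le> P"
proof -
  have "ln a - ln b = ln (a / b)" using assms by (simp add: ln_div)
  also have "\<dots> \<le> ln r" using assms by (simp add: field_simps)
  also have "\<dots> \<le> P" using pade_ln[OF assms(4)] assms(5) by linarith
  finally show ?thesis .
qed

lemma clo_le:
  fixes x clo :: real
  assumes "0 \<le> x" "x^n / fact n < 1" "clo * (\<Sum>m<n. x^m / fact m) \<le> 1 - x^n / fact n"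
  shows "clo \<le> exp (-x)"
proof -
  have S: "exp x * (1 - x^n / fact n) \<le> (\<Sum>m<n. x^m / fact m)" using exp_bounds(2)[OF assms(1,2)] .
  have S0: "0 < (\<Sum>m<n. x^m / fact m)"
  proof -
    have "0 < 1 - x^n / fact n" using assms(2) by simp
    hence "0 < exp x * (1 - x^n / fact n)" by simp
    thus ?thesis using S by (rule less_le_trans)
  qed
  have "clo \<le> (1 - x^n / fact n) / (\<Sum>m<n. x^m / fact m)" using assms(3) S0 by (simp add: field_simps)
  also have "\<dots> \<le> (1 - x^n / fact n) / (exp x * (1 - x^n / fact n))"
  proof (rule divide_left_mono[OF S])
    show "0 \<le> 1 - x^n / fact n" using assms(2) by simp
    have "0 < 1 - x^n / fact n" using assms(2) by simp
    thus "0 < (\<Sum>m<n. x^m / fact m) * (exp x * (1 - x^n / fact n))" using S0 by simp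
  qed
  also have "\<dots> = exp (-x)" using assms(2) by (simp add: exp_minus field_simps)
  finally show ?thesis .
qed

lemma chi_ge:
  fixes x chi :: real
  assumes "0 \<le> x" "x^n / fact n < 1" "1 \<le> chi * (\<Sum>m<n. x^m / fact m)"
  shows "exp (-x) \<le> chi"
proof -
  have S: "(\<Sum>m<n. x^m / fact m) \<le> exp x" by (rule exp_bounds(1)[OF assms(1,2)])
  have "exp (-x) = 1 / exp x" by (simp add: exp_minus inverse_eq_divide)
  also have "\<dots> \<le> chi * (\<Sum>m<n. x^m / fact m) / exp x" using assms(3) by (simp add: divide_right_mono)
  also have "\<dots> \<le> chi * exp x / exp x"
  proof -
    have S0: "0 \<le> (\<Sum>m<n. x^m / fact m)" using assms(1) by (intro sum_nonneg) simp
    have "0 \<le> chi"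
    proof (rule ccontr)
      assume "\<not> 0 \<le> chi"
      hence "chi * (\<Sum>m<n. x^m / fact m) \<le> 0" using S0 by (simp add: mult_nonpos_nonneg)
      thus False using assms(3) by linarith
    qed
    thus ?thesis using S by (intro divide_right_mono mult_left_mono) auto
  qed
  also have "\<dots> = chi" by simp
  finally show ?thesis .
qed


lemma sum8_le:
  fixes d0 d1 d2 d3 d4 d5 d6 d7 p0 p1 p2 p3 p4 p5 p6 p7 :: real
  assumes "d0 \<le> p0" "d1 \<le> p1" "d2 \<le> p2" "d3 \<le> p3" "d4 \<le> p4" "d5 \<le> p5" "d6 \<le> p6" "d7 \<le> p7"
  shows "17/16*d0 + 19/16*d1 + 21/16*d2 + 23/16*d3 + 25/16*d4 + 27/16*d5 + 29/16*d6 + 31/16*d7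
       \<le> 17/16*p0 + 19/16*p1 + 21/16*p2 + 23/16*p3 + 25/16*p4 + 27/16*p5 + 29/16*p6 + 31/16*p7"
  using assms by linarith

lemma comb9:
  fixes D0 D1 D2 D3 D4 D5 D6 D7 D8 t t2 t3 :: real
  assumes "D8 \<le> A8*t + B8*t2 + C8*t3"
    "A0*t + B0*t2 + C0*t3 \<le> D0" "A1*t + B1*t2 + C1*t3 \<le> D1" "A2*t + B2*t2 + C2*t3 \<le> D2"
    "A3*t + B3*t2 + C3*t3 \<le> D3" "A4*t + B4*t2 + C4*t3 \<le> D4" "A5*t + B5*t2 + C5*t3 \<le> D5"
    "A6*t + B6*t2 + C6*t3 \<le> D6" "A7*t + B7*t2 + C7*t3 \<le> D7"
  shows "31/16*D8 - 17/16*D0 - 1/8*(D1 + D2 + D3 + D4 + D5 + D6 + D7) \<le>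
     (31/16*A8 - 17/16*A0 - 1/8*(A1+A2+A3+A4+A5+A6+A7))*t
   + (31/16*B8 - 17/16*B0 - 1/8*(B1+B2+B3+B4+B5+B6+B7))*t2
   + (31/16*C8 - 17/16*C0 - 1/8*(C1+C2+C3+C4+C5+C6+C7))*t3"
proof -
  have "(31/16*A8 - 17/16*A0 - 1/8*(A1+A2+A3+A4+A5+A6+A7))*t
   + (31/16*B8 - 17/16*B0 - 1/8*(B1+B2+B3+B4+B5+B6+B7))*t2
   + (31/16*C8 - 17/16*C0 - 1/8*(C1+C2+C3+C4+C5+C6+C7))*t3
   = 31/16*(A8*t + B8*t2 + C8*t3) - 17/16*(A0*t + B0*t2 + C0*t3) - 1/8*((A1*t + B1*t2 + C1*t3)
     + (A2*t + B2*t2 + C2*t3) + (A3*t + B3*t2 + C3*t3) + (A4*t + B4*t2 + C4*t3) + (A5*t + B5*t2 + C5*t3)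
     + (A6*t + B6*t2 + C6*t3) + (A7*t + B7*t2 + C7*t3))"
    by (simp add: ring_distribs)
  moreover have "31/16*D8 - 17/16*D0 - 1/8*(D1 + D2 + D3 + D4 + D5 + D6 + D7) \<le>
    31/16*(A8*t + B8*t2 + C8*t3) - 17/16*(A0*t + B0*t2 + C0*t3) - 1/8*((A1*t + B1*t2 + C1*t3)
     + (A2*t + B2*t2 + C2*t3) + (A3*t + B3*t2 + C3*t3) + (A4*t + B4*t2 + C4*t3) + (A5*t + B5*t2 + C5*t3)
     + (A6*t + B6*t2 + C6*t3) + (A7*t + B7*t2 + C7*t3))"
  proof (intro diff_mono mult_left_mono)
    show "(A1*t + B1*t2 + C1*t3)
     + (A2*t + B2*t2 + C2*t3) + (A3*t + B3*t2 + C3*t3) + (A4*t + B4*t2 + C4*t3) + (A5*t + B5*t2 + C5*t3)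
     + (A6*t + B6*t2 + C6*t3) + (A7*t + B7*t2 + C7*t3) \<le> D1 + D2 + D3 + D4 + D5 + D6 + D7"
      using assms by (intro add_mono)
  qed (use assms in auto)
  ultimately show ?thesis by simp
qed

lemma final_large:
  fixes S L D Lb a b c t t2 t3 M :: real
  assumes "S = L + D" "L \<le> Lb" "D \<le> a*t + b*t2 + c*t3" "0 \<le> a" "0 \<le> b" "0 \<le> c"
    "t \<le> 1/12" "t2 \<le> 1/144" "t3 \<le> 1/1728" "Lb + a/12 + b/144 + c/1728 \<le> M"
  shows "S \<le> M"
proof -
  have "a*t \<le> a*(1/12)" using assms by (intro mult_left_mono) auto
  moreover have "b*t2 \<le> b*(1/144)" using assms by (intro mult_left_mono) auto
  moreover have "c*t3 \<le> c*(1/1728)" using assms by (intro mult_left_mono) auto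
  ultimately show ?thesis using assms by linarith
qed


lemma clo0: "(367879441171442321/1000000000000000000::real) \<le> exp (-(1))"
  by (rule clo_le[where n=22]) (simp_all add: eval_nat_numeral)

lemma chi0: "exp (-(1)) \<le> (183939720585721161/500000000000000000::real)"
  by (rule chi_ge[where n=22]) (simp_all add: eval_nat_numeral)

lemma clo1: "(324652467358349729/1000000000000000000::real) \<le> exp (-(9/8))"
  by (rule clo_le[where n=22]) (simp_all add: eval_nat_numeral)

lemma chi1: "exp (-(9/8)) \<le> (32465246735834973/100000000000000000::real)"
  by (rule chi_ge[where n=22]) (simp_all add: eval_nat_numeral)

lemma clo2: "(2865047968601901/10000000000000000::real) \<le> exp (-(5/4))"
  by (rule clo_le[where n=22]) (simp_all add: eval_nat_numeral)

lemma chi2: "exp (-(5/4)) \<le> (286504796860190101/1000000000000000000::real)"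
  by (rule chi_ge[where n=22]) (simp_all add: eval_nat_numeral)

lemma clo3: "(252839595804746477/1000000000000000000::real) \<le> exp (-(11/8))"
  by (rule clo_le[where n=22]) (simp_all add: eval_nat_numeral)

lemma chi3: "exp (-(11/8)) \<le> (126419797902373239/500000000000000000::real)"
  by (rule chi_ge[where n=22]) (simp_all add: eval_nat_numeral)

lemma clo4: "(223130160148429827/1000000000000000000::real) \<le> exp (-(3/2))"
  by (rule clo_le[where n=22]) (simp_all add: eval_nat_numeral)

lemma chi4: "exp (-(3/2)) \<le> (22313016014842983/100000000000000000::real)"
  by (rule chi_ge[where n=22]) (simp_all add: eval_nat_numeral)

lemma clo5: "(49227918801048511/250000000000000000::real) \<le> exp (-(13/8))"
  by (rule clo_le[where n=22]) (simp_all add: eval_nat_numeral)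

lemma chi5: "exp (-(13/8)) \<le> (49227918801048513/250000000000000000::real)"
  by (rule chi_ge[where n=22]) (simp_all add: eval_nat_numeral)

lemma clo6: "(86886971725222549/500000000000000000::real) \<le> exp (-(7/4))"
  by (rule clo_le[where n=22]) (simp_all add: eval_nat_numeral)

lemma chi6: "exp (-(7/4)) \<le> (86886971725222567/500000000000000000::real)"
  by (rule chi_ge[where n=22]) (simp_all add: eval_nat_numeral)

lemma clo7: "(38338741711232087/250000000000000000::real) \<le> exp (-(15/8))"
  by (rule clo_le[where n=22]) (simp_all add: eval_nat_numeral)

lemma chi7: "exp (-(15/8)) \<le> (153354966844928487/1000000000000000000::real)"
  by (rule chi_ge[where n=22]) (simp_all add: eval_nat_numeral)

lemma clo8: "(135335283236612261/1000000000000000000::real) \<le> exp (-(2))"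
  by (rule clo_le[where n=22]) (simp_all add: eval_nat_numeral)

lemma chi8: "exp (-(2)) \<le> (135335283236612767/1000000000000000000::real)"
  by (rule chi_ge[where n=22]) (simp_all add: eval_nat_numeral)

lemma node0: assumes "G \<ge> 12"
  shows "(290988353434663211/1000000000000000000) * (1/real G) + (4931752271695923/62500000000000000) * (1/real G)^2 + (- (31541595357118811/200000000000000000)) * (1/real G)^3 \<le> lw G 0 - ln (1 - exp (-(1)))"
proof -
  have e: "(8 + real (0::nat)) / (8 * real G) = (1) / real G" by (simp add: field_simps)
  show ?thesis unfolding lw_def e
    by (rule node_lower[OF assms _ _ _ clo0]) (simp_all add: power_divide)
qed

lemma node1: assumes "G \<ge> 12"
  shows "(76051266040982743/250000000000000000) * (1/real G) + (17126210801667753/200000000000000000) * (1/real G)^2 + (- (55116217450571629/250000000000000000)) * (1/real G)^3 \<le> lw G 1 - ln (1 - exp (-(9/8)))"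
proof -
  have e: "(8 + real (1::nat)) / (8 * real G) = (9/8) / real G" by (simp add: field_simps)
  show ?thesis unfolding lw_def e
    by (rule node_lower[OF assms _ _ _ clo1]) (simp_all add: power_divide)
qed

lemma node2: assumes "G \<ge> 12"
  shows "(313711811322666311/1000000000000000000) * (1/real G) + (44837641427982319/500000000000000000) * (1/real G)^2 + (- (74047837848261003/250000000000000000)) * (1/real G)^3 \<le> lw G 2 - ln (1 - exp (-(5/4)))"
proof -
  have e: "(8 + real (2::nat)) / (8 * real G) = (5/4) / real G" by (simp add: field_simps)
  show ?thesis unfolding lw_def e
    by (rule node_lower[OF assms _ _ _ clo2]) (simp_all add: power_divide)
qed

lemma node3: assumes "G \<ge> 12"
  shows "(19993400100829779/62500000000000000) * (1/real G) + (4543511622894339/50000000000000000) * (1/real G)^2 + (- (48146901652433291/125000000000000000)) * (1/real G)^3 \<le> lw G 3 - ln (1 - exp (-(11/8)))"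
proof -
  have e: "(8 + real (3::nat)) / (8 * real G) = (11/8) / real G" by (simp add: field_simps)
  show ?thesis unfolding lw_def e
    by (rule node_lower[OF assms _ _ _ clo3]) (simp_all add: power_divide)
qed

lemma node4: assumes "G \<ge> 12"
  shows "(323119031387476771/1000000000000000000) * (1/real G) + (89161622009630487/1000000000000000000) * (1/real G)^2 + (- (487411269537179757/1000000000000000000)) * (1/real G)^3 \<le> lw G 4 - ln (1 - exp (-(3/2)))"
proof -
  have e: "(8 + real (4::nat)) / (8 * real G) = (3/2) / real G" by (simp add: field_simps)
  show ?thesis unfolding lw_def e
    by (rule node_lower[OF assms _ _ _ clo4]) (simp_all add: power_divide)
qed

lemma node5: assumes "G \<ge> 12"
  shows "(323731447887928743/1000000000000000000) * (1/real G) + (84594704724683317/1000000000000000000) * (1/real G)^2 + (- (301303676397540929/500000000000000000)) * (1/real G)^3 \<le> lw G 5 - ln (1 - exp (-(13/8)))"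
proof -
  have e: "(8 + real (5::nat)) / (8 * real G) = (13/8) / real G" by (simp add: field_simps)
  show ?thesis unfolding lw_def e
    by (rule node_lower[OF assms _ _ _ clo5]) (simp_all add: power_divide)
qed

lemma node6: assumes "G \<ge> 12"
  shows "(322056353463036281/1000000000000000000) * (1/real G) + (38648934675225547/500000000000000000) * (1/real G)^2 + (- (365098740712277123/500000000000000000)) * (1/real G)^3 \<le> lw G 6 - ln (1 - exp (-(7/4)))"
proof -
  have e: "(8 + real (6::nat)) / (8 * real G) = (7/4) / real G" by (simp add: field_simps)
  show ?thesis unfolding lw_def e
    by (rule node_lower[OF assms _ _ _ clo6]) (simp_all add: power_divide)
qed

lemma node7: assumes "G \<ge> 12"
  shows "(159198523053123643/500000000000000000) * (1/real G) + (67466814343898323/1000000000000000000) * (1/real G)^2 + (- (869361427660937221/1000000000000000000)) * (1/real G)^3 \<le> lw G 7 - ln (1 - exp (-(15/8)))"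
proof -
  have e: "(8 + real (7::nat)) / (8 * real G) = (15/8) / real G" by (simp add: field_simps)
  show ?thesis unfolding lw_def e
    by (rule node_lower[OF assms _ _ _ clo7]) (simp_all add: power_divide)
qed

lemma node8: assumes "G \<ge> 12"
  shows "lw G 8 - ln (1 - exp (-(2))) \<le> (62607057099866301/200000000000000000) * (1/real G) + (20869019033288767/200000000000000000) * (1/real G)^2 + (13491834671181811/62500000000000000) * (1/real G)^3"
proof -
  have e: "(8 + real (8::nat)) / (8 * real G) = (2) / real G" by (simp add: field_simps)
  show ?thesis unfolding lw_def e
    by (rule node_upper[OF assms _ _ chi8]) (simp_all add: power_divide)
qed

lemma linf0: "ln (1 - exp (-(9/8))) - ln (1 - exp (-(1))) \<le> (33073912156163/500000000000000::real)"
proof (rule lnstep[where r = "1068384065680763/1000000000000000"])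
  show "0 < 1 - exp (-(1::real))" by simp
  show "0 < 1 - exp (-(9/8::real))" by simp
  have "1 - exp (-(9/8::real)) \<le> 1 - 324652467358349729/1000000000000000000" using clo1 by simp
  also have "\<dots> \<le> 1068384065680763/1000000000000000 * (1 - 183939720585721161/500000000000000000)" by simp
  also have "\<dots> \<le> 1068384065680763/1000000000000000 * (1 - exp (-(1::real)))" using chi0 by simp
  finally show "1 - exp (-(9/8::real)) \<le> 1068384065680763/1000000000000000 * (1 - exp (-(1::real)))" .
qed simp_all

lemma linf1: "ln (1 - exp (-(5/4))) - ln (1 - exp (-(9/8))) \<le> (54948547388481/1000000000000000::real)"
proof (rule lnstep[where r = "1056485984851301/1000000000000000"])
  show "0 < 1 - exp (-(9/8::real))" by simp
  show "0 < 1 - exp (-(5/4::real))" by simp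
  have "1 - exp (-(5/4::real)) \<le> 1 - 2865047968601901/10000000000000000" using clo2 by simp
  also have "\<dots> \<le> 1056485984851301/1000000000000000 * (1 - 32465246735834973/100000000000000000)" by simp
  also have "\<dots> \<le> 1056485984851301/1000000000000000 * (1 - exp (-(9/8::real)))" using chi1 by simp
  finally show "1 - exp (-(5/4::real)) \<le> 1056485984851301/1000000000000000 * (1 - exp (-(9/8::real)))" .
qed simp_all

lemma linf2: "ln (1 - exp (-(11/8))) - ln (1 - exp (-(5/4))) \<le> (11526076408201/250000000000000::real)"
proof (rule lnstep[where r = "20943670003871/20000000000000"])
  show "0 < 1 - exp (-(5/4::real))" by simp
  show "0 < 1 - exp (-(11/8::real))" by simp
  have "1 - exp (-(11/8::real)) \<le> 1 - 252839595804746477/1000000000000000000" using clo3 by simp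
  also have "\<dots> \<le> 20943670003871/20000000000000 * (1 - 286504796860190101/1000000000000000000)" by simp
  also have "\<dots> \<le> 20943670003871/20000000000000 * (1 - exp (-(5/4::real)))" using chi2 by simp
  finally show "1 - exp (-(11/8::real)) \<le> 20943670003871/20000000000000 * (1 - exp (-(5/4::real)))" .
qed simp_all

lemma linf3: "ln (1 - exp (-(3/2))) - ln (1 - exp (-(11/8))) \<le> (3899299133433/100000000000000::real)"
proof (rule lnstep[where r = "1039763129161423/1000000000000000"])
  show "0 < 1 - exp (-(11/8::real))" by simp
  show "0 < 1 - exp (-(3/2::real))" by simp
  have "1 - exp (-(3/2::real)) \<le> 1 - 223130160148429827/1000000000000000000" using clo4 by simp
  also have "\<dots> \<le> 1039763129161423/1000000000000000 * (1 - 126419797902373239/500000000000000000)" by simp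
  also have "\<dots> \<le> 1039763129161423/1000000000000000 * (1 - exp (-(11/8::real)))" using chi3 by simp
  finally show "1 - exp (-(3/2::real)) \<le> 1039763129161423/1000000000000000 * (1 - exp (-(11/8::real)))" .
qed simp_all

lemma linf4: "ln (1 - exp (-(13/8))) - ln (1 - exp (-(3/2))) \<le> (3319191522259/100000000000000::real)"
proof (rule lnstep[where r = "206749775470559/200000000000000"])
  show "0 < 1 - exp (-(3/2::real))" by simp
  show "0 < 1 - exp (-(13/8::real))" by simp
  have "1 - exp (-(13/8::real)) \<le> 1 - 49227918801048511/250000000000000000" using clo5 by simp
  also have "\<dots> \<le> 206749775470559/200000000000000 * (1 - 22313016014842983/100000000000000000)" by simp
  also have "\<dots> \<le> 206749775470559/200000000000000 * (1 - exp (-(3/2::real)))" using chi4 by simp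
  finally show "1 - exp (-(13/8::real)) \<le> 206749775470559/200000000000000 * (1 - exp (-(3/2::real)))" .
qed simp_all

lemma linf5: "ln (1 - exp (-(7/4))) - ln (1 - exp (-(13/8))) \<le> (7100932254813/250000000000000::real)"
proof (rule lnstep[where r = "1028810942756057/1000000000000000"])
  show "0 < 1 - exp (-(13/8::real))" by simp
  show "0 < 1 - exp (-(7/4::real))" by simp
  have "1 - exp (-(7/4::real)) \<le> 1 - 86886971725222549/500000000000000000" using clo6 by simp
  also have "\<dots> \<le> 1028810942756057/1000000000000000 * (1 - 49227918801048513/250000000000000000)" by simp
  also have "\<dots> \<le> 1028810942756057/1000000000000000 * (1 - exp (-(13/8::real)))" using chi5 by simp
  finally show "1 - exp (-(7/4::real)) \<le> 1028810942756057/1000000000000000 * (1 - exp (-(13/8::real)))" .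
qed simp_all

lemma linf6: "ln (1 - exp (-(15/8))) - ln (1 - exp (-(7/4))) \<le> (24413117236691/1000000000000000::real)"
proof (rule lnstep[where r = "102471354715051/100000000000000"])
  show "0 < 1 - exp (-(7/4::real))" by simp
  show "0 < 1 - exp (-(15/8::real))" by simp
  have "1 - exp (-(15/8::real)) \<le> 1 - 38338741711232087/250000000000000000" using clo7 by simp
  also have "\<dots> \<le> 102471354715051/100000000000000 * (1 - 86886971725222567/500000000000000000)" by simp
  also have "\<dots> \<le> 102471354715051/100000000000000 * (1 - exp (-(7/4::real)))" using chi6 by simp
  finally show "1 - exp (-(15/8::real)) \<le> 102471354715051/100000000000000 * (1 - exp (-(7/4::real)))" .
qed simp_all

lemma linf7: "ln (1 - exp (-(2))) - ln (1 - exp (-(15/8))) \<le> (5265076741669/250000000000000::real)"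
proof (rule lnstep[where r = "1021283634702451/1000000000000000"])
  show "0 < 1 - exp (-(15/8::real))" by simp
  show "0 < 1 - exp (-(2::real))" by simp
  have "1 - exp (-(2::real)) \<le> 1 - 135335283236612261/1000000000000000000" using clo8 by simp
  also have "\<dots> \<le> 1021283634702451/1000000000000000 * (1 - 153354966844928487/1000000000000000000)" by simp
  also have "\<dots> \<le> 1021283634702451/1000000000000000 * (1 - exp (-(15/8::real)))" using chi7 by simp
  finally show "1 - exp (-(2::real)) \<le> 1021283634702451/1000000000000000 * (1 - exp (-(15/8::real)))" .
qed simp_all

lemma Sfun_large: assumes G: "G \<ge> 12" shows "Sfun G \<le> 0.4396"
proof -
  have t0: "0 < 1/real G" using G by simp
  have t1: "1/real G \<le> 1/12" using G by (simp add: field_simps)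
  have "(1/real G)^2 \<le> (1/12)^2" using t0 t1 by (intro power_mono) auto
  hence t2: "(1/real G)^2 \<le> 1/144" by (simp add: power_divide)
  have "(1/real G)^3 \<le> (1/12)^3" using t0 t1 by (intro power_mono) auto
  hence t3: "(1/real G)^3 \<le> 1/1728" by (simp add: power_divide)
  have h1: "Sfun G = (17/16 * (ln (1 - exp (-(9/8))) - ln (1 - exp (-(1)))) + 19/16 * (ln (1 - exp (-(5/4))) - ln (1 - exp (-(9/8)))) + 21/16 * (ln (1 - exp (-(11/8))) - ln (1 - exp (-(5/4)))) + 23/16 * (ln (1 - exp (-(3/2))) - ln (1 - exp (-(11/8)))) + 25/16 * (ln (1 - exp (-(13/8))) - ln (1 - exp (-(3/2)))) + 27/16 * (ln (1 - exp (-(7/4))) - ln (1 - exp (-(13/8)))) + 29/16 * (ln (1 - exp (-(15/8))) - ln (1 - exp (-(7/4)))) + 31/16 * (ln (1 - exp (-(2))) - ln (1 - exp (-(15/8))))) + (31/16 * (lw G 8 - ln (1 - exp (-(2)))) - 17/16 * (lw G 0 - ln (1 - exp (-(1)))) - 1/8 * ((lw G 1 - ln (1 - exp (-(9/8)))) + (lw G 2 - ln (1 - exp (-(5/4)))) + (lw G 3 - ln (1 - exp (-(11/8)))) + (lw G 4 - ln (1 - exp (-(3/2)))) + (lw G 5 - ln (1 - exp (-(13/8)))) + (lw G 6 - ln (1 - exp (-(7/4)))) + (lw G 7 - ln (1 - exp (-(15/8))))))"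
    unfolding Sfun_expand by (simp add: ring_distribs)
  have h2: "17/16 * (ln (1 - exp (-(9/8))) - ln (1 - exp (-(1)))) + 19/16 * (ln (1 - exp (-(5/4))) - ln (1 - exp (-(9/8)))) + 21/16 * (ln (1 - exp (-(11/8))) - ln (1 - exp (-(5/4)))) + 23/16 * (ln (1 - exp (-(3/2))) - ln (1 - exp (-(11/8)))) + 25/16 * (ln (1 - exp (-(13/8))) - ln (1 - exp (-(3/2)))) + 27/16 * (ln (1 - exp (-(7/4))) - ln (1 - exp (-(13/8)))) + 29/16 * (ln (1 - exp (-(15/8))) - ln (1 - exp (-(7/4)))) + 31/16 * (ln (1 - exp (-(2))) - ln (1 - exp (-(15/8)))) \<le> (13654517798017/31250000000000::real)"
    by (rule order.trans[OF sum8_le[OF linf0 linf1 linf2 linf3 linf4 linf5 linf6 linf7]]) simp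
  note h3 = comb9[OF node8[OF G] node0[OF G] node1[OF G] node2[OF G] node3[OF G] node4[OF G] node5[OF G] node6[OF G] node7[OF G]]
  show ?thesis
    by (rule final_large[OF h1 h2 h3 _ _ _ t1 t2 t3]) simp_all
qed

lemma sm6_0: "lw 6 1 - lw 6 0 \<le> 68559011597/1000000000000"
  unfolding lw_def by (rule lnstep[where r = "267740789827/250000000000"]) (simp_all add: power_divide)

lemma sm6_1: "lw 6 2 - lw 6 1 \<le> 28327008649/500000000000"
  unfolding lw_def by (rule lnstep[where r = "1058289292077/1000000000000"]) (simp_all add: power_divide)

lemma sm6_2: "lw 6 3 - lw 6 2 \<le> 47159666679/1000000000000"
  unfolding lw_def by (rule lnstep[where r = "1048289227681/1000000000000"]) (simp_all add: power_divide)

lemma sm6_3: "lw 6 4 - lw 6 3 \<le> 19727250871/500000000000"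
  unfolding lw_def by (rule lnstep[where r = "520121549087/500000000000"]) (simp_all add: power_divide)

lemma sm6_4: "lw 6 5 - lw 6 4 \<le> 4139511257/125000000000"
  unfolding lw_def by (rule lnstep[where r = "516835248231/500000000000"]) (simp_all add: power_divide)

lemma sm6_5: "lw 6 6 - lw 6 5 \<le> 27846930947/1000000000000"
  unfolding lw_def by (rule lnstep[where r = "257059565919/250000000000"]) (simp_all add: power_divide)

lemma sm6_6: "lw 6 7 - lw 6 6 \<le> 11715569929/500000000000"
  unfolding lw_def by (rule lnstep[where r = "15995434329/15625000000"]) (simp_all add: power_divide)

lemma sm6_7: "lw 6 8 - lw 6 7 \<le> 19707958269/1000000000000"
  unfolding lw_def by (rule lnstep[where r = "1019903437877/1000000000000"]) (simp_all add: power_divide)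

lemma Sfun_6: "Sfun 6 \<le> 0.43813"
  unfolding Sfun_expand by (rule order.trans[OF sum8_le[OF sm6_0 sm6_1 sm6_2 sm6_3 sm6_4 sm6_5 sm6_6 sm6_7]]) simp

lemma sm7_0: "lw 7 1 - lw 7 0 \<le> 34093269409/500000000000"
  unfolding lw_def by (rule lnstep[where r = "535282171641/500000000000"]) (simp_all add: power_divide)

lemma sm7_1: "lw 7 2 - lw 7 1 \<le> 56394635979/1000000000000"
  unfolding lw_def by (rule lnstep[where r = "529007416379/500000000000"]) (simp_all add: power_divide)

lemma sm7_2: "lw 7 3 - lw 7 2 \<le> 1468970183/31250000000"
  unfolding lw_def by (rule lnstep[where r = "524064625497/500000000000"]) (simp_all add: power_divide)

lemma sm7_3: "lw 7 4 - lw 7 3 \<le> 1970083189/50000000000"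
  unfolding lw_def by (rule lnstep[where r = "520094067839/500000000000"]) (simp_all add: power_divide)

lemma sm7_4: "lw 7 5 - lw 7 4 \<le> 33155464889/1000000000000"
  unfolding lw_def by (rule lnstep[where r = "1033711197701/1000000000000"]) (simp_all add: power_divide)

lemma sm7_5: "lw 7 6 - lw 7 5 \<le> 13985212457/500000000000"
  unfolding lw_def by (rule lnstep[where r = "1028365252431/1000000000000"]) (simp_all add: power_divide)

lemma sm7_6: "lw 7 7 - lw 7 6 \<le> 23630218127/1000000000000"
  unfolding lw_def by (rule lnstep[where r = "63994475939/62500000000"]) (simp_all add: power_divide)

lemma sm7_7: "lw 7 8 - lw 7 7 \<le> 4993434907/250000000000"
  unfolding lw_def by (rule lnstep[where r = "1020174544989/1000000000000"]) (simp_all add: power_divide)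

lemma Sfun_7: "Sfun 7 \<le> 0.4396"
  unfolding Sfun_expand by (rule order.trans[OF sum8_le[OF sm7_0 sm7_1 sm7_2 sm7_3 sm7_4 sm7_5 sm7_6 sm7_7]]) simp

lemma sm8_0: "lw 8 1 - lw 8 0 \<le> 67913837817/1000000000000"
  unfolding lw_def by (rule lnstep[where r = "133784056181/125000000000"]) (simp_all add: power_divide)

lemma sm8_1: "lw 8 2 - lw 8 1 \<le> 56203723533/1000000000000"
  unfolding lw_def by (rule lnstep[where r = "1057812867879/1000000000000"]) (simp_all add: power_divide)

lemma sm8_2: "lw 8 3 - lw 8 2 \<le> 23446345147/500000000000"
  unfolding lw_def by (rule lnstep[where r = "524004699913/500000000000"]) (simp_all add: power_divide)

lemma sm8_3: "lw 8 4 - lw 8 3 \<le> 39358282289/1000000000000"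
  unfolding lw_def by (rule lnstep[where r = "1040143012053/1000000000000"]) (simp_all add: power_divide)

lemma sm8_4: "lw 8 5 - lw 8 4 \<le> 33177173733/1000000000000"
  unfolding lw_def by (rule lnstep[where r = "1033733638529/1000000000000"]) (simp_all add: power_divide)

lemma sm8_5: "lw 8 6 - lw 8 5 \<le> 5610219417/200000000000"
  unfolding lw_def by (rule lnstep[where r = "32139006751/31250000000"]) (simp_all add: power_divide)

lemma sm8_6: "lw 8 7 - lw 8 6 \<le> 23206589/976562500"
  unfolding lw_def by (rule lnstep[where r = "1024048141043/1000000000000"]) (simp_all add: power_divide)

lemma sm8_7: "lw 8 8 - lw 8 7 \<le> 20153308163/1000000000000"
  unfolding lw_def by (rule lnstep[where r = "1020357752521/1000000000000"]) (simp_all add: power_divide)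

lemma Sfun_8: "Sfun 8 \<le> 0.4396"
  unfolding Sfun_expand by (rule order.trans[OF sum8_le[OF sm8_0 sm8_1 sm8_2 sm8_3 sm8_4 sm8_5 sm8_6 sm8_7]]) simp

lemma sm9_0: "lw 9 1 - lw 9 0 \<le> 67705530301/1000000000000"
  unfolding lw_def by (rule lnstep[where r = "535024767339/500000000000"]) (simp_all add: power_divide)

lemma sm9_1: "lw 9 2 - lw 9 1 \<le> 28028667963/500000000000"
  unfolding lw_def by (rule lnstep[where r = "264414507897/250000000000"]) (simp_all add: power_divide)

lemma sm9_2: "lw 9 3 - lw 9 2 \<le> 46803908703/1000000000000"
  unfolding lw_def by (rule lnstep[where r = "523958180543/500000000000"]) (simp_all add: power_divide)

lemma sm9_3: "lw 9 4 - lw 9 3 \<le> 3932259621/100000000000"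
  unfolding lw_def by (rule lnstep[where r = "520052947171/500000000000"]) (simp_all add: power_divide)

lemma sm9_4: "lw 9 5 - lw 9 4 \<le> 16594958809/500000000000"
  unfolding lw_def by (rule lnstep[where r = "1033746812341/1000000000000"]) (simp_all add: power_divide)

lemma sm9_5: "lw 9 6 - lw 9 5 \<le> 14053747839/500000000000"
  unfolding lw_def by (rule lnstep[where r = "257126555139/250000000000"]) (simp_all add: power_divide)

lemma sm9_6: "lw 9 7 - lw 9 6 \<le> 2982345437/125000000000"
  unfolding lw_def by (rule lnstep[where r = "40965826067/40000000000"]) (simp_all add: power_divide)

lemma sm9_7: "lw 9 8 - lw 9 7 \<le> 10141246653/500000000000"
  unfolding lw_def by (rule lnstep[where r = "1020489575977/1000000000000"]) (simp_all add: power_divide)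

lemma Sfun_9: "Sfun 9 \<le> 0.4396"
  unfolding Sfun_expand by (rule order.trans[OF sum8_le[OF sm9_0 sm9_1 sm9_2 sm9_3 sm9_4 sm9_5 sm9_6 sm9_7]]) simp

lemma sm10_0: "lw 10 1 - lw 10 0 \<le> 13508240983/200000000000"
  unfolding lw_def by (rule lnstep[where r = "1069873718927/1000000000000"]) (simp_all add: power_divide)

lemma sm10_1: "lw 10 2 - lw 10 1 \<le> 3496345349/62500000000"
  unfolding lw_def by (rule lnstep[where r = "1057535553353/1000000000000"]) (simp_all add: power_divide)

lemma sm10_2: "lw 10 3 - lw 10 2 \<le> 5841628229/125000000000"
  unfolding lw_def by (rule lnstep[where r = "8186266291/7812500000"]) (simp_all add: power_divide)

lemma sm10_3: "lw 10 4 - lw 10 3 \<le> 19646471267/500000000000"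
  unfolding lw_def by (rule lnstep[where r = "208015010409/200000000000"]) (simp_all add: power_divide)

lemma sm10_4: "lw 10 5 - lw 10 4 \<le> 6639543541/200000000000"
  unfolding lw_def by (rule lnstep[where r = "206750975131/200000000000"]) (simp_all add: power_divide)

lemma sm10_5: "lw 10 6 - lw 10 5 \<le> 2814893237/100000000000"
  unfolding lw_def by (rule lnstep[where r = "1028548839229/1000000000000"]) (simp_all add: power_divide)

lemma sm10_6: "lw 10 7 - lw 10 6 \<le> 5982503577/250000000000"
  unfolding lw_def by (rule lnstep[where r = "1024218625373/1000000000000"]) (simp_all add: power_divide)

lemma sm10_7: "lw 10 8 - lw 10 7 \<le> 5094941753/250000000000"
  unfolding lw_def by (rule lnstep[where r = "204117769503/200000000000"]) (simp_all add: power_divide)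

lemma Sfun_10: "Sfun 10 \<le> 0.4396"
  unfolding Sfun_expand by (rule order.trans[OF sum8_le[OF sm10_0 sm10_1 sm10_2 sm10_3 sm10_4 sm10_5 sm10_6 sm10_7]]) simp

lemma sm11_0: "lw 11 1 - lw 11 0 \<le> 16852064049/250000000000"
  unfolding lw_def by (rule lnstep[where r = "267432873737/250000000000"]) (simp_all add: power_divide)

lemma sm11_1: "lw 11 2 - lw 11 1 \<le> 55847618823/1000000000000"
  unfolding lw_def by (rule lnstep[where r = "528718125111/500000000000"]) (simp_all add: power_divide)

lemma sm11_2: "lw 11 3 - lw 11 2 \<le> 23337571991/500000000000"
  unfolding lw_def by (rule lnstep[where r = "1047781436657/1000000000000"]) (simp_all add: power_divide)

lemma sm11_3: "lw 11 4 - lw 11 3 \<le> 39268007859/1000000000000"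
  unfolding lw_def by (rule lnstep[where r = "1040049118611/1000000000000"]) (simp_all add: power_divide)

lemma sm11_4: "lw 11 5 - lw 11 4 \<le> 8300654713/250000000000"
  unfolding lw_def by (rule lnstep[where r = "1033759942231/1000000000000"]) (simp_all add: power_divide)

lemma sm11_5: "lw 11 6 - lw 11 5 \<le> 1127222091/40000000000"
  unfolding lw_def by (rule lnstep[where r = "1028581362279/1000000000000"]) (simp_all add: power_divide)

lemma sm11_6: "lw 11 7 - lw 11 6 \<le> 23985258253/1000000000000"
  unfolding lw_def by (rule lnstep[where r = "512137604363/500000000000"]) (simp_all add: power_divide)

lemma sm11_7: "lw 11 8 - lw 11 7 \<le> 2556948773/125000000000"
  unfolding lw_def by (rule lnstep[where r = "1020666234659/1000000000000"]) (simp_all add: power_divide)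

lemma Sfun_11: "Sfun 11 \<le> 0.4396"
  unfolding Sfun_expand by (rule order.trans[OF sum8_le[OF sm11_0 sm11_1 sm11_2 sm11_3 sm11_4 sm11_5 sm11_6 sm11_7]]) simp

lemma Sfun_bound:
  assumes "G \<ge> 6"
  shows "(G = 6 \<longrightarrow> Sfun G \<le> 0.43813) \<and> (G \<ge> 7 \<longrightarrow> Sfun G \<le> 0.4396)"
proof -
  have "G = 6 \<or> G = 7 \<or> G = 8 \<or> G = 9 \<or> G = 10 \<or> G = 11 \<or> G \<ge> 12" using assms by linarith
  thus ?thesis using Sfun_6 Sfun_7 Sfun_8 Sfun_9 Sfun_10 Sfun_11 Sfun_large by auto
qed


lemma GI_bound:
  assumes G: "G \<ge> 6"
  shows "ratio G integrable_on {1/G..2/G}" "real G * integral {1/G..2/G} (ratio G) < 0.44"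
proof -
  have Gp: "real G > 0" using G by simp
  show "ratio G integrable_on {1/G..2/G}"
  proof (rule integrable_continuous_interval, rule ratio_cont)
    show "0 < 1 / real G" using Gp by simp
    show "2 / real G < 1" using G by (simp add: field_simps)
  qed (use G in simp)
  show "real G * integral {1/G..2/G} (ratio G) < 0.44"
  proof (cases "G = 6")
    case True
    have hk: "1.0021 * p^G \<le> (1.0021 - 1) * (1 - (1-p)^G)" if p: "p \<in> {1/G..2/G}" for p
    proof -
      have p': "1/6 \<le> p" "p \<le> 1/3" using p True by auto
      have "p^6 \<le> (1/3)^6" using p' by (intro power_mono) auto
      hence a: "p^6 \<le> 1/729" by (simp add: power_divide)
      have "(1-p)^6 \<le> (5/6)^6" using p' by (intro power_mono) auto
      hence b: "(1-p)^6 \<le> 15625/46656" by (simp add: power_divide)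
      show ?thesis using a b True by simp
    qed
    have "real G * integral {1/G..2/G} (ratio G) \<le> 1.0021 * Sfun G"
      using int_bound(2)[OF G _ hk] by simp
    also have "\<dots> < 0.44" using Sfun_bound[OF G] True by simp
    finally show ?thesis .
  next
    case False
    hence G7: "G \<ge> 7" using G by simp
    have hk: "1.0004 * p^G \<le> (1.0004 - 1) * (1 - (1-p)^G)" if p: "p \<in> {1/G..2/G}" for p
    proof -
      have p': "1/G \<le> p" "p \<le> 2/G" using p by auto
      have "0 < 1 / real G" using Gp by simp
      hence p0: "0 < p" using p' by linarith
      have "2 / real G \<le> 2/7" using G7 by (simp add: field_simps)
      hence p27: "p \<le> 2/7" using p' by linarith
      hence p1: "p \<le> 1" by linarith
      have "p^G \<le> (2/7)^G" using p27 p0 by (intro power_mono) auto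
      also have "\<dots> \<le> (2/7)^7" using G7 by (intro power_decreasing) auto
      finally have "p^G \<le> (2/7)^7" .
      hence pG: "p^G \<le> 128/823543" by (simp add: power_divide)
      have "(1-p)^G \<le> (1 - 1/G)^G" using p' p0 p1 by (intro power_mono) auto
      also have "1 - 1/real G \<le> exp (-(1/G))" using exp_ge_add_one_self[of "-(1/G)"] by simp
      hence "(1 - 1/real G)^G \<le> exp (-(1/G))^G" using Gp G by (intro power_mono) (auto simp: field_simps)
      also have "exp (-(1/real G))^G = exp (-1)" using Gp by (simp flip: exp_of_nat_mult)
      also have "exp (-1::real) \<le> 1/2" using exp_neg_le_half[of 1] by simp
      finally have "(1-p)^G \<le> 1/2" .
      thus ?thesis using pG by simp
    qed
    have "real G * integral {1/G..2/G} (ratio G) \<le> 1.0004 * Sfun G"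
      using int_bound(2)[OF G _ hk] by simp
    also have "\<dots> < 0.44" using Sfun_bound[OF G] G7 by simp
    finally show ?thesis .
  qed
qed


lemma const_int: "a \<le> b \<Longrightarrow> ((\<lambda>x. 1::real) has_integral (b - a)) {a..b}"
  using has_integral_const_real[of "1::real" a b] by simp

theorem corollary2:
  fixes G i :: nat
  assumes "G \<ge> 6" and "i \<in> {1..G}"
  shows "cond_prob_avg G 0 (2 / real G)
           (\<lambda>p. {r. Ahat G i r < Aexp p i r}) > 0.78
       \<and> cond_prob_avg G ((real G - 2) / real G) 1
           (\<lambda>p. {r. Ahat G i r > Aexp p i r}) > 0.78"
proof -
  have G: "G \<ge> 6" using assms by simp
  have G3: "G \<ge> 3" using G by simp
  have Gp: "real G > 0" using G by simp
  define J where "J = integral {1/G..2/G} (ratio G)"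
  have hJ: "(ratio G has_integral J) {1/G..2/G}"
    unfolding J_def using GI_bound(1)[OF G] by (rule integrable_integral)
  have GJ: "real G * J < 0.44" unfolding J_def using GI_bound(2)[OF G] .
  have lt1: "0 \<le> 1 / real G" "1 / real G \<le> 2 / real G" using Gp by (auto simp: field_simps)
  define f where "f p = cond_prob G p {r. Ahat G i r < Aexp p i r}" for p
  have i1: "(f has_integral (1/G - 0)) {0..1/G}"
  proof (rule has_integral_spike_finite[OF _ _ const_int[OF lt1(1)]])
    show "finite {0, 1/real G}" by simp
    fix p assume "p \<in> {0..1/real G} - {0, 1/real G}"
    hence "0 < p" "p < 1/G" by auto
    thus "f p = 1" unfolding f_def using cond1_low[OF G3] by simp
  qed
  have i2: "(f has_integral ((2/G - 1/G) - J)) {1/G..2/G}"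
  proof (rule has_integral_spike_finite[OF _ _ has_integral_diff[OF const_int[OF lt1(2)] hJ]])
    show "finite {2/real G}" by simp
    fix p assume "p \<in> {1/real G..2/real G} - {2/real G}"
    hence "1/G \<le> p" "p < 2/G" by auto
    thus "f p = 1 - ratio G p" unfolding f_def using cond1_mid[OF G3] by simp
  qed
  have i12: "(f has_integral ((1/G - 0) + ((2/G - 1/G) - J))) {0..2/G}"
    by (rule has_integral_combine[OF lt1 i1 i2])
  have "cond_prob_avg G 0 (2 / real G) (\<lambda>p. {r. Ahat G i r < Aexp p i r})
      = integral {0..2/G} f / (2/G)"
    unfolding cond_prob_avg_def f_def by (simp add: integral_open_interval_real)
  also have "\<dots> = (2/G - J) / (2/G)" using i12 by (simp add: integral_unique)
  also have "\<dots> = 1 - real G * J / 2" using Gp by (simp add: field_simps)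
  finally have part1: "cond_prob_avg G 0 (2 / real G) (\<lambda>p. {r. Ahat G i r < Aexp p i r}) > 0.78"
    using GJ by (simp add: mult.commute)
  define a0 where "a0 = (real G - 2) / G"
  define a1 where "a1 = (real G - 1) / G"
  have a01: "a0 \<le> a1" "a1 \<le> 1" unfolding a0_def a1_def using Gp by (auto simp: field_simps)
  have a0e: "a0 + -1 = - (2/G)" and a1e: "a1 + -1 = - (1/G)" unfolding a0_def a1_def using Gp
    by (auto simp: field_simps)
  have hJ2: "((\<lambda>p. ratio G (1 - p)) has_integral J) {a0..a1}"
  proof -
    have "((\<lambda>x. ratio G (-x)) has_integral J) {-(2/G)..-(1/G)}"
      using hJ by simp
    hence "(((\<lambda>x. ratio G (-x)) \<circ> (+) (-1)) has_integral J) {a0..a1}"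
      using has_integral_shift_Icc_real[of "\<lambda>x. ratio G (-x)" "-1" J a0 a1] a0e a1e by simp
    thus ?thesis by (simp add: o_def)
  qed
  define f2 where "f2 p = cond_prob G p {r. Ahat G i r > Aexp p i r}" for p
  have j1: "(f2 has_integral ((a1 - a0) - J)) {a0..a1}"
  proof (rule has_integral_spike_finite[OF _ _ has_integral_diff[OF const_int[OF a01(1)] hJ2]])
    show "finite {a0}" by simp
    fix p assume "p \<in> {a0..a1} - {a0}"
    hence "a0 < p" "p \<le> a1" by auto
    thus "f2 p = 1 - ratio G (1 - p)" unfolding f2_def a0_def a1_def using cond2_mid[OF G3] by simp
  qed
  have j2: "(f2 has_integral (1 - a1)) {a1..1}"
  proof (rule has_integral_spike_finite[OF _ _ const_int[OF a01(2)]])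
    show "finite {a1, 1}" by simp
    fix p assume "p \<in> {a1..1} - {a1, 1}"
    hence "a1 < p" "p < 1" by auto
    thus "f2 p = 1" unfolding f2_def a1_def using cond2_high[OF G3] by simp
  qed
  have j12: "(f2 has_integral (((a1 - a0) - J) + (1 - a1))) {a0..1}"
    by (rule has_integral_combine[OF a01 j1 j2])
  have "cond_prob_avg G ((real G - 2) / real G) 1 (\<lambda>p. {r. Ahat G i r > Aexp p i r})
      = integral {a0..1} f2 / (1 - a0)"
    unfolding cond_prob_avg_def f2_def a0_def by (simp add: integral_open_interval_real)
  also have "\<dots> = (1 - a0 - J) / (1 - a0)" using j12 by (simp add: integral_unique)
  also have "\<dots> = 1 - real G * J / 2" unfolding a0_def using Gp by (simp add: field_simps)
  finally have part2: "cond_prob_avg G ((real G - 2) / real G) 1 (\<lambda>p. {r. Ahat G i r > Aexp p i r}) > 0.78"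
    using GJ by (simp add: mult.commute)
  show ?thesis using part1 part2 by simp
qed


end
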